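(* Let $q^N$ be probability distributions on $\mathbb{Z}$ satisfying assumptions (1)–(5) below, and let $X_k^N$ be a discrete-time random walk with jump distribution $q^N$ and $X_0^N=x_N\ge 2N^{5/6}$. Set $T_0=-1$ and for $m\ge0$ $$S_m=\inf\{k>T_m:|X_k^N|>2N^{5/6}\},\qquad T_{m+1}=\inf\{k>S_m:|X_k^N|<|X^N_{S_m}|-N^{5/6}\},$$ and $B_j=\sum_{m=0}^{j}(S_m-T_m)$. Then there is a constant $C$ such that for all large $N$, $$P\{B_{\lfloor N^{2/9}\rfloor}>2N^{17/18}\}\le CN^{-1/3}.$$
   Context: Assumptions: (1) $q^N(z)=q^N(-z)$; (2) $\sum_z z^2q^N(z)=\sigma_N^2N$ with $\sigma_N\to\sigma\in(0,\infty)$; (3) there is $h>0$ independent of $N$ with $q^N(z)\ge h/\sqrt N$ for $|z|\le N^{1/2}$; (4) $q^N(z)\le C\exp(-c|z|/\sqrt N)$ with $c,C>0$ independent of $N$; (5) $q^N(z)=0$ for $|z|>B\sqrt N\log N$ with $B$ independent of $N$. *)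

theory Defs
  imports "HOL-Probability.Probability"
begin

definition walk :: "int \<Rightarrow> (nat \<Rightarrow> int) \<Rightarrow> nat \<Rightarrow> int" where
  "walk x xi k = x + (\<Sum>i<k. xi i)"

definition S_time :: "nat \<Rightarrow> (nat \<Rightarrow> int) \<Rightarrow> ereal \<Rightarrow> ereal" where
  "S_time N X t = Inf {ereal (real k) | k. ereal (real k) > t \<and>
      real_of_int \<bar>X k\<bar> > 2 * real N powr (5/6)}"

primrec T_time :: "nat \<Rightarrow> (nat \<Rightarrow> int) \<Rightarrow> nat \<Rightarrow> ereal" where
  "T_time N X 0 = -1"
| "T_time N X (Suc m) =
     (let s = S_time N X (T_time N X m) in
      Inf {ereal (real k) | k. ereal (real k) > s \<and>
        real_of_int \<bar>X k\<bar> < real_of_int \<bar>X (nat \<lfloor>real_of_ereal s\<rfloor>)\<bar> - real N powr (5/6)})"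

definition B_sum :: "nat \<Rightarrow> (nat \<Rightarrow> int) \<Rightarrow> nat \<Rightarrow> ereal" where
  "B_sum N X j = (\<Sum>m\<le>j. S_time N X (T_time N X m) - T_time N X m)"

end

theory Submission
  imports Defs "HOL-Real_Asymp.Real_Asymp"
begin

locale RW = fixes p :: "int pmf"
begin

abbreviation Sq :: "(nat \<Rightarrow> int) measure" where
  "Sq \<equiv> PiM (UNIV::nat set) (\<lambda>_. measure_pmf p)"

sublocale SS: sequence_space "measure_pmf p"
  by unfold_locales

lemma space_Sq[simp]: "space Sq = UNIV"
  by (auto simp: space_PiM)

lemma split_bound:
  assumes Phi: "{\<omega>\<in>space Sq. Phi \<omega>} \<in> sets Sq" and A: "A \<in> sets Sq"
    and PA: "\<And>\<omega> \<omega>'. Phi (comb_seq i \<omega> \<omega>') \<Longrightarrow> \<omega> \<in> A"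
    and Pe: "\<And>\<omega>. \<omega> \<in> A \<Longrightarrow> emeasure Sq {\<omega>'\<in>space Sq. Phi (comb_seq i \<omega> \<omega>')} \<le> e"
  shows "emeasure Sq {\<omega>\<in>space Sq. Phi \<omega>} \<le> e * emeasure Sq A"
proof -
  let ?f = "\<lambda>(\<omega>, \<omega>'). comb_seq i \<omega> \<omega>'"
  let ?X = "?f -` {\<omega>\<in>space Sq. Phi \<omega>} \<inter> space (Sq \<Otimes>\<^sub>M Sq)"
  have X: "?X \<in> sets (Sq \<Otimes>\<^sub>M Sq)"
    using measurable_sets[OF measurable_comb_seq Phi] .
  have "emeasure Sq {\<omega>\<in>space Sq. Phi \<omega>} = emeasure (distr (Sq \<Otimes>\<^sub>M Sq) Sq ?f) {\<omega>\<in>space Sq. Phi \<omega>}"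
    using SS.PiM_comb_seq[of i] by simp
  also have "\<dots> = emeasure (Sq \<Otimes>\<^sub>M Sq) ?X"
    by (rule emeasure_distr[OF measurable_comb_seq Phi])
  also have "\<dots> = (\<integral>\<^sup>+\<omega>. emeasure Sq (Pair \<omega> -` ?X) \<partial>Sq)"
    by (rule SS.emeasure_pair_measure_alt[OF X])
  also have "\<dots> \<le> (\<integral>\<^sup>+\<omega>. e * indicator A \<omega> \<partial>Sq)"
  proof (rule nn_integral_mono)
    fix \<omega> assume "\<omega> \<in> space Sq"
    have eq: "Pair \<omega> -` ?X = {\<omega>'\<in>space Sq. Phi (comb_seq i \<omega> \<omega>')}"
      by (auto simp: space_pair_measure)
    show "emeasure Sq (Pair \<omega> -` ?X) \<le> e * indicator A \<omega>"
    proof (cases "\<omega> \<in> A")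
      case True then show ?thesis using Pe[OF True] eq by simp
    next
      case False
      then have "Pair \<omega> -` ?X = {}" using PA eq by auto
      then show ?thesis by simp
    qed
  qed
  also have "\<dots> = e * emeasure Sq A"
    using A by (simp add: nn_integral_cmult_indicator)
  finally show ?thesis .
qed

end

definition Z :: "nat \<Rightarrow> (nat \<Rightarrow> int) \<Rightarrow> int" where
  "Z n \<omega> = (\<Sum>j<n. \<omega> j)"

lemma Z_comb_le: "k \<le> i \<Longrightarrow> Z k (comb_seq i \<omega> \<omega>') = Z k \<omega>"
  unfolding Z_def by (intro sum.cong) (auto simp: comb_seq_def)

lemma Z_comb_add: "Z (i + n) (comb_seq i \<omega> \<omega>') = Z i \<omega> + Z n \<omega>'"
proof (induction n)
  case 0 then show ?case using Z_comb_le[of i i \<omega> \<omega>'] by (simp add: Z_def)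
next
  case (Suc n)
  have "Z (i + Suc n) (comb_seq i \<omega> \<omega>') = Z (i + n) (comb_seq i \<omega> \<omega>') + comb_seq i \<omega> \<omega>' (i+n)"
    by (simp add: Z_def)
  then show ?case using Suc by (simp add: Z_def comb_seq_def)
qed

lemma walk_Z: "walk x \<omega> k = x + Z k \<omega>"
  by (simp add: walk_def Z_def)

primrec conv :: "int pmf \<Rightarrow> nat \<Rightarrow> int pmf" where
  "conv p 0 = return_pmf 0"
| "conv p (Suc n) = bind_pmf (conv p n) (\<lambda>w. map_pmf (\<lambda>s. w + s) p)"

context RW begin

lemma Z_meas[measurable]: "Z n \<in> measurable Sq (count_space UNIV)"
proof (induction n)
  case 0 then show ?case by (simp add: Z_def)
next
  case (Suc n)
  have eq: "Z (Suc n) = (\<lambda>\<omega>. (\<lambda>w \<omega>. w + \<omega> n) (Z n \<omega>) \<omega>)" by (auto simp: Z_def fun_eq_iff)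
  have "(\<lambda>\<omega>. \<omega> n) \<in> measurable Sq (count_space UNIV)"
    using measurable_component_singleton[of n UNIV "\<lambda>_. measure_pmf p"] by simp
  then have "\<And>w. (\<lambda>\<omega>. w + \<omega> n) \<in> measurable Sq (count_space UNIV)"
    by (rule measurable_compose) simp
  then show ?case unfolding eq by (rule measurable_compose_countable[OF _ Suc])
qed

lemma distr_Z: "distr Sq (count_space UNIV) (Z n) = measure_pmf (conv p n)"
proof (induction n)
  case 0
  show ?case
    by (rule measure_eqI_countable[where A=UNIV]) (auto simp: Z_def emeasure_distr SS.emeasure_space_1)
next
  case (Suc n)
  show ?case
  proof (rule measure_eqI_countable[where A=UNIV])
    fix z :: int
    let ?f = "\<lambda>(\<omega>, \<omega>'). comb_seq n \<omega> \<omega>'"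
    let ?B = "{\<omega>\<in>space Sq. Z (Suc n) \<omega> = z}"
    have B: "?B \<in> sets Sq" by measurable
    have "emeasure (distr Sq (count_space UNIV) (Z (Suc n))) {z} = emeasure Sq ?B"
      by (subst emeasure_distr) (auto intro!: arg_cong[where f="emeasure Sq"])
    also have "\<dots> = emeasure (distr (Sq \<Otimes>\<^sub>M Sq) Sq ?f) ?B"
      using SS.PiM_comb_seq[of n] by simp
    also have "\<dots> = emeasure (Sq \<Otimes>\<^sub>M Sq) (?f -` ?B \<inter> space (Sq \<Otimes>\<^sub>M Sq))"
      by (rule emeasure_distr[OF measurable_comb_seq B])
    also have "\<dots> = (\<integral>\<^sup>+\<omega>. emeasure Sq (Pair \<omega> -` (?f -` ?B \<inter> space (Sq \<Otimes>\<^sub>M Sq))) \<partial>Sq)"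
      by (rule SS.emeasure_pair_measure_alt) (rule measurable_sets[OF measurable_comb_seq B])
    also have "\<dots> = (\<integral>\<^sup>+\<omega>. ennreal (pmf p (z - Z n \<omega>)) \<partial>Sq)"
    proof (rule nn_integral_cong)
      fix \<omega>
      have "Pair \<omega> -` (?f -` ?B \<inter> space (Sq \<Otimes>\<^sub>M Sq)) = {\<omega>'\<in>space Sq. \<omega>' 0 \<in> {z - Z n \<omega>}}"
        using Z_comb_add[of n 1 \<omega>] by (auto simp: space_pair_measure Z_def)
      then show "emeasure Sq (Pair \<omega> -` (?f -` ?B \<inter> space (Sq \<Otimes>\<^sub>M Sq))) = ennreal (pmf p (z - Z n \<omega>))"
        using SS.emeasure_PiM_Collect_single[of 0 "{z - Z n \<omega>}"] by (simp add: emeasure_pmf_single)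
    qed
    also have "\<dots> = (\<integral>\<^sup>+w. ennreal (pmf p (z - w)) \<partial>distr Sq (count_space UNIV) (Z n))"
      by (subst nn_integral_distr) auto
    also have "\<dots> = (\<integral>\<^sup>+w. ennreal (pmf p (z - w)) \<partial>measure_pmf (conv p n))"
      using Suc by simp
    also have "\<dots> = pmf (conv p (Suc n)) z"
    proof -
      have "\<And>w. pmf (map_pmf (\<lambda>s. w + s) p) z = pmf p (z - w)"
        using pmf_map_inj'[of "\<lambda>s. w + s" p "z - w" for w] by (simp add: inj_def)
      then show ?thesis by (simp add: ennreal_pmf_bind)
    qed
    also have "\<dots> = emeasure (measure_pmf (conv p (Suc n))) {z}"
      by (simp add: emeasure_pmf_single)
    finally show "emeasure (distr Sq (count_space UNIV) (Z (Suc n))) {z} = emeasure (measure_pmf (conv p (Suc n))) {z}" .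
  qed auto
qed

lemma emeasure_Z: "emeasure Sq {\<omega>\<in>space Sq. Z n \<omega> \<in> A} = emeasure (measure_pmf (conv p n)) A"
proof -
  have "emeasure Sq {\<omega>\<in>space Sq. Z n \<omega> \<in> A} = emeasure (distr Sq (count_space UNIV) (Z n)) A"
    by (subst emeasure_distr) (auto intro!: arg_cong[where f="emeasure Sq"])
  then show ?thesis by (simp add: distr_Z)
qed

end

lemma exp_bind_pmf_nonneg:
  fixes g :: "'b \<Rightarrow> real"
  assumes "finite (set_pmf M)" "\<And>x. finite (set_pmf (f x))" "\<And>y. g y \<ge> 0"
  shows "measure_pmf.expectation (bind_pmf M f) g = measure_pmf.expectation M (\<lambda>x. measure_pmf.expectation (f x) g)"
proof -
  have fin: "finite (set_pmf (bind_pmf M f))" using assms by (simp add: set_bind_pmf)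
  have "ennreal (measure_pmf.expectation (bind_pmf M f) g) = (\<integral>\<^sup>+y. g y \<partial>bind_pmf M f)"
    by (rule nn_integral_eq_integral[symmetric]) (auto intro: integrable_measure_pmf_finite[OF fin] assms)
  also have "\<dots> = (\<integral>\<^sup>+x. \<integral>\<^sup>+y. g y \<partial>f x \<partial>M)" by simp
  also have "\<dots> = (\<integral>\<^sup>+x. ennreal (measure_pmf.expectation (f x) g) \<partial>M)"
    by (intro nn_integral_cong nn_integral_eq_integral) (auto intro: integrable_measure_pmf_finite assms)
  also have "\<dots> = ennreal (measure_pmf.expectation M (\<lambda>x. measure_pmf.expectation (f x) g))"
    by (intro nn_integral_eq_integral) (auto intro!: integrable_measure_pmf_finite assms Bochner_Integration.integral_nonneg)
  finally show ?thesis
    by (subst (asm) ennreal_inj) (auto intro!: Bochner_Integration.integral_nonneg assms)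
qed

locale RWs = RW +
  assumes fin: "finite (set_pmf p)"
    and sym: "\<And>z. pmf p (- z) = pmf p z"
begin

definition s2 where "s2 = measure_pmf.expectation p (\<lambda>z. (real_of_int z)^2)"
definition m4 where "m4 = measure_pmf.expectation p (\<lambda>z. (real_of_int z)^4)"

lemma map_uminus_p: "map_pmf uminus p = p"
proof (rule pmf_eqI)
  fix z :: int
  have "pmf (map_pmf uminus p) z = pmf (map_pmf uminus p) (- (- z))" by simp
  also have "\<dots> = pmf p (- z)" by (rule pmf_map_inj') (simp add: inj_def)
  finally show "pmf (map_pmf uminus p) z = pmf p z" using sym by simp
qed

lemma odd_exp:
  assumes "\<And>z. f (- z) = - f z"
  shows "measure_pmf.expectation p (f :: int \<Rightarrow> real) = 0"
proof -
  have "measure_pmf.expectation p f = measure_pmf.expectation (map_pmf uminus p) f"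
    by (simp add: map_uminus_p)
  also have "\<dots> = - measure_pmf.expectation p f" using assms by simp
  finally show ?thesis by simp
qed

lemma exp1: "measure_pmf.expectation p (\<lambda>z. real_of_int z) = 0"
  by (rule odd_exp) simp
lemma exp3: "measure_pmf.expectation p (\<lambda>z. (real_of_int z)^3) = 0"
  by (rule odd_exp) simp

lemma intp: "integrable (measure_pmf p) (f :: int \<Rightarrow> real)"
  by (rule integrable_measure_pmf_finite[OF fin])

lemma fin_conv: "finite (set_pmf (conv p n))"
  by (induction n) (auto simp: set_bind_pmf fin)

lemma intc: "integrable (measure_pmf (conv p n)) (f :: int \<Rightarrow> real)"
  by (rule integrable_measure_pmf_finite[OF fin_conv])

lemma exp_conv_Suc:
  fixes g :: "int \<Rightarrow> real"
  assumes "\<And>y. g y \<ge> 0"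
  shows "measure_pmf.expectation (conv p (Suc n)) g =
    measure_pmf.expectation (conv p n) (\<lambda>w. measure_pmf.expectation p (\<lambda>s. g (w + s)))"
proof -
  have "measure_pmf.expectation (conv p (Suc n)) g =
    measure_pmf.expectation (conv p n) (\<lambda>w. measure_pmf.expectation (map_pmf (\<lambda>s. w + s) p) g)"
    using exp_bind_pmf_nonneg[of "conv p n" "\<lambda>w. map_pmf (\<lambda>s. w + s) p" g] fin_conv fin assms by simp
  then show ?thesis by simp
qed

lemma inner2: "measure_pmf.expectation p (\<lambda>s. (real_of_int (w + s))^2) = (real_of_int w)^2 + s2"
proof -
  have "(\<lambda>s. (real_of_int (w + s))^2) = (\<lambda>s. (real_of_int w)^2 + (2 * real_of_int w * real_of_int s + (real_of_int s)^2))"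
    by (rule ext) (simp, algebra)
  then show ?thesis
    by (simp add: intp s2_def exp1)
qed

lemma inner4: "measure_pmf.expectation p (\<lambda>s. (real_of_int (w + s))^4) = (real_of_int w)^4 + (6 * s2) * (real_of_int w)^2 + m4"
proof -
  have "(\<lambda>s. (real_of_int (w + s))^4) = (\<lambda>s. (real_of_int w)^4 + (4 * (real_of_int w)^3 * real_of_int s
     + (6 * (real_of_int w)^2 * (real_of_int s)^2 + (4 * real_of_int w * (real_of_int s)^3 + (real_of_int s)^4))))"
    by (rule ext) (simp, algebra)
  then show ?thesis
    by (simp add: intp s2_def m4_def exp1 exp3)
qed

lemma c2: "measure_pmf.expectation (conv p n) (\<lambda>w. (real_of_int w)^2) = real n * s2"
proof (induction n)
  case 0 then show ?case by simp
next
  case (Suc n)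
  have "measure_pmf.expectation (conv p (Suc n)) (\<lambda>w. (real_of_int w)^2)
     = measure_pmf.expectation (conv p n) (\<lambda>w. measure_pmf.expectation p (\<lambda>s. (real_of_int (w + s))^2))"
    by (rule exp_conv_Suc) simp
  also have "\<dots> = measure_pmf.expectation (conv p n) (\<lambda>w. (real_of_int w)^2 + s2)"
    by (simp only: inner2)
  also have "\<dots> = real (Suc n) * s2" using Suc by (simp add: intc algebra_simps)
  finally show ?case .
qed

lemma c4: "measure_pmf.expectation (conv p n) (\<lambda>w. (real_of_int w)^4) = real n * m4 + 3 * real n * (real n - 1) * s2^2"
proof (induction n)
  case 0 then show ?case by simp
next
  case (Suc n)
  have "measure_pmf.expectation (conv p (Suc n)) (\<lambda>w. (real_of_int w)^4)
     = measure_pmf.expectation (conv p n) (\<lambda>w. measure_pmf.expectation p (\<lambda>s. (real_of_int (w + s))^4))"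
    by (rule exp_conv_Suc) simp
  also have "\<dots> = measure_pmf.expectation (conv p n) (\<lambda>w. (real_of_int w)^4 + (6 * s2) * (real_of_int w)^2 + m4)"
    by (simp only: inner4)
  also have "\<dots> = measure_pmf.expectation (conv p n) (\<lambda>w. (real_of_int w)^4) + (6 * s2) * measure_pmf.expectation (conv p n) (\<lambda>w. (real_of_int w)^2) + m4"
    by (simp add: intc)
  also have "\<dots> = real (Suc n) * m4 + 3 * real (Suc n) * (real (Suc n) - 1) * s2^2"
    using Suc c2[of n] by (simp add: algebra_simps power2_eq_square)
  finally show ?case .
qed

lemma map_uminus_conv: "map_pmf uminus (conv p n) = conv p n"
proof (induction n)
  case 0 then show ?case by simp
next
  case (Suc n)
  have "map_pmf uminus (conv p (Suc n)) = bind_pmf (conv p n) (\<lambda>w. map_pmf (\<lambda>s. - w - s) p)"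
    by (simp add: map_bind_pmf map_pmf_comp)
  also have "\<dots> = bind_pmf (conv p n) (\<lambda>w. map_pmf (\<lambda>s. - w + s) p)"
  proof -
    have "\<And>w. map_pmf (\<lambda>s. - w - s) p = map_pmf (\<lambda>s. - w + s) (map_pmf uminus p)"
      unfolding map_pmf_comp by (rule map_pmf_cong) auto
    then show ?thesis by (simp only: map_uminus_p)
  qed
  also have "\<dots> = bind_pmf (map_pmf uminus (conv p n)) (\<lambda>w. map_pmf (\<lambda>s. w + s) p)"
    by (auto simp: bind_map_pmf intro!: bind_pmf_cong map_pmf_cong)
  finally show ?case using Suc by simp
qed

lemma s2_nonneg: "s2 \<ge> 0" unfolding s2_def by (simp add: Bochner_Integration.integral_nonneg)

lemma anti:
  assumes V: "real n * s2 > 0" and m: "real n * m4 \<le> (real n * s2)^2"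
  shows "measure_pmf.prob (conv p n) {w. \<bar>real_of_int w\<bar> > sqrt (real n * s2) / 2} \<ge> 1/32"
proof -
  define V where "V = real n * s2"
  define t where "t = sqrt V / 2"
  define A where "A = {w. \<bar>real_of_int w\<bar> > t}"
  have V0: "V > 0" using V by (simp add: V_def)
  have tt: "t^2 = V / 4" using V0 by (simp add: t_def power_divide)
  have pw: "(real_of_int w)^2 \<le> V/4 + 8 * V * indicator A w + (real_of_int w)^4 / (8 * V)" for w
  proof -
    let ?w = "real_of_int w"
    show ?thesis
    proof (cases "w \<in> A")
      case False
      then have "\<bar>?w\<bar> \<le> t" by (simp add: A_def)
      then have "\<bar>?w\<bar>^2 \<le> t^2" by (intro power_mono) auto
      then have "?w^2 \<le> t^2" by simp
      moreover have "0 \<le> ?w^4 / (8*V)" using V0 by simp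
      ultimately show ?thesis using False tt by simp
    next
      case True
      have i1: "indicator A w = (1::real)" using True by simp
      have nn: "0 \<le> ?w^4 / (8*V)" using V0 by simp
      show ?thesis
      proof (cases "?w^2 \<le> 8 * V")
        case True2: True
        then show ?thesis using nn V0 unfolding i1 by linarith
      next
        case False
        then have "?w^2 * (8 * V) \<le> ?w^2 * ?w^2" using V0 by (intro mult_left_mono) auto
        then have "?w^2 \<le> ?w^4 / (8*V)" using V0 by (simp add: field_simps power4_eq_xxxx power2_eq_square)
        then show ?thesis using i1 V0 by simp
      qed
    qed
  qed
  have "V = measure_pmf.expectation (conv p n) (\<lambda>w. (real_of_int w)^2)" by (simp add: c2 V_def)
  also have "\<dots> \<le> measure_pmf.expectation (conv p n) (\<lambda>w. V/4 + 8 * V * indicator A w + (real_of_int w)^4 / (8 * V))"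
    by (intro integral_mono intc pw)
  also have "\<dots> = V/4 + 8 * V * measure_pmf.prob (conv p n) A + measure_pmf.expectation (conv p n) (\<lambda>w. (real_of_int w)^4) / (8 * V)"
    by (simp add: intc)
  also have "measure_pmf.expectation (conv p n) (\<lambda>w. (real_of_int w)^4) \<le> 4 * V^2"
  proof -
    have "3 * real n * (real n - 1) * s2^2 \<le> 3 * V^2"
      using s2_nonneg by (simp add: V_def power2_eq_square mult_right_mono algebra_simps)
    then show ?thesis using m by (simp add: c4 V_def)
  qed
  then have "measure_pmf.expectation (conv p n) (\<lambda>w. (real_of_int w)^4) / (8 * V) \<le> V / 2"
    using V0 by (simp add: field_simps power2_eq_square)
  finally have "V / 4 \<le> 8 * V * measure_pmf.prob (conv p n) A" by simp
  then have "V * (1/32) \<le> V * measure_pmf.prob (conv p n) A" by simp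
  then have "1/32 \<le> measure_pmf.prob (conv p n) A" using V0 by (simp only: mult_le_cancel_left_pos)
  then show ?thesis by (simp add: A_def t_def V_def)
qed

lemma prob_conv_sym: "measure_pmf.prob (conv p n) {w. real_of_int w < - t} = measure_pmf.prob (conv p n) {w. real_of_int w > t}"
proof -
  have "measure_pmf.prob (conv p n) {w. real_of_int w < - t} = measure_pmf.prob (map_pmf uminus (conv p n)) {w. real_of_int w < - t}"
    by (simp add: map_uminus_conv)
  also have "\<dots> = measure_pmf.prob (conv p n) {w. real_of_int w > t}"
    by (simp add: vimage_def)
  finally show ?thesis .
qed

lemma anti_side:
  assumes V: "real n * s2 > 0" and m: "real n * m4 \<le> (real n * s2)^2"
  shows "measure_pmf.prob (conv p n) {w. real_of_int w < - (sqrt (real n * s2) / 2)} \<ge> 1/64"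
    and "measure_pmf.prob (conv p n) {w. real_of_int w > sqrt (real n * s2) / 2} \<ge> 1/64"
proof -
  define t where "t = sqrt (real n * s2) / 2"
  have t0: "t \<ge> 0" using s2_nonneg by (simp add: t_def)
  have "{w. \<bar>real_of_int w\<bar> > t} = {w. real_of_int w < - t} \<union> {w. real_of_int w > t}" by auto
  moreover have "measure_pmf.prob (conv p n) ({w. real_of_int w < - t} \<union> {w. real_of_int w > t})
     = measure_pmf.prob (conv p n) {w. real_of_int w < - t} + measure_pmf.prob (conv p n) {w. real_of_int w > t}"
    using t0 by (intro measure_pmf.finite_measure_Union) auto
  ultimately have "1/32 \<le> 2 * measure_pmf.prob (conv p n) {w. real_of_int w > t}"
    using anti[OF V m, folded t_def] prob_conv_sym[of n t] by simp
  then show "measure_pmf.prob (conv p n) {w. real_of_int w > sqrt (real n * s2) / 2} \<ge> 1/64" by (simp add: t_def[symmetric])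
  then show "measure_pmf.prob (conv p n) {w. real_of_int w < - (sqrt (real n * s2) / 2)} \<ge> 1/64" using prob_conv_sym[of n t] by (simp add: t_def[symmetric])
qed

end

definition bsum :: "nat \<Rightarrow> nat \<Rightarrow> (nat \<Rightarrow> int) \<Rightarrow> int" where
  "bsum L b \<omega> = Z (Suc b * L) \<omega> - Z (b * L) \<omega>"

lemma bsum_comb_Suc: "bsum L (Suc b) (comb_seq L \<omega> \<omega>') = bsum L b \<omega>'"
proof -
  have "Z (Suc (Suc b) * L) (comb_seq L \<omega> \<omega>') = Z L \<omega> + Z (Suc b * L) \<omega>'"
    using Z_comb_add[of L "Suc b * L" \<omega> \<omega>'] by (simp add: algebra_simps)
  moreover have "Z (Suc b * L) (comb_seq L \<omega> \<omega>') = Z L \<omega> + Z (b * L) \<omega>'"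
    using Z_comb_add[of L "b * L" \<omega> \<omega>'] by (simp add: algebra_simps)
  ultimately show ?thesis by (simp add: bsum_def)
qed

lemma bsum_comb_0: "bsum L 0 (comb_seq L \<omega> \<omega>') = Z L \<omega>"
  using Z_comb_le[of L L \<omega> \<omega>'] by (simp add: bsum_def Z_def)

context RW begin

lemma Zr_meas[measurable]: "(\<lambda>\<omega>. real_of_int (Z n \<omega>)) \<in> borel_measurable Sq"
  using measurable_compose[OF Z_meas, of real_of_int borel] by simp

lemma bsum_meas[measurable]: "(\<lambda>\<omega>. real_of_int (bsum L b \<omega>)) \<in> borel_measurable Sq"
  unfolding bsum_def by simp

lemma blocks_bound:
  fixes c :: real
  shows "emeasure Sq {\<omega>\<in>space Sq. \<forall>b<r. \<bar>real_of_int (bsum L b \<omega>)\<bar> \<le> c}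
     \<le> (emeasure Sq {\<omega>\<in>space Sq. \<bar>real_of_int (Z L \<omega>)\<bar> \<le> c}) ^ r"
proof (induction r)
  case 0 then show ?case by (simp add: SS.emeasure_space_1[simplified])
next
  case (Suc r)
  let ?A = "{\<omega>\<in>space Sq. \<bar>real_of_int (Z L \<omega>)\<bar> \<le> c}"
  have "emeasure Sq {\<omega>\<in>space Sq. \<forall>b<Suc r. \<bar>real_of_int (bsum L b \<omega>)\<bar> \<le> c}
     \<le> (emeasure Sq ?A) ^ r * emeasure Sq ?A"
  proof (rule split_bound[where i=L])
    show "{\<omega>\<in>space Sq. \<forall>b<Suc r. \<bar>real_of_int (bsum L b \<omega>)\<bar> \<le> c} \<in> sets Sq" by measurable
    show "?A \<in> sets Sq" by measurable
    fix \<omega> \<omega>'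
    assume "\<forall>b<Suc r. \<bar>real_of_int (bsum L b (comb_seq L \<omega> \<omega>'))\<bar> \<le> c"
    then show "\<omega> \<in> ?A" using bsum_comb_0[of L \<omega> \<omega>'] by force
  next
    fix \<omega>
    have "{\<omega>'\<in>space Sq. \<forall>b<Suc r. \<bar>real_of_int (bsum L b (comb_seq L \<omega> \<omega>'))\<bar> \<le> c}
        \<subseteq> {\<omega>'\<in>space Sq. \<forall>b<r. \<bar>real_of_int (bsum L b \<omega>')\<bar> \<le> c}"
      using bsum_comb_Suc by fastforce
    then have "emeasure Sq {\<omega>'\<in>space Sq. \<forall>b<Suc r. \<bar>real_of_int (bsum L b (comb_seq L \<omega> \<omega>'))\<bar> \<le> c}
        \<le> emeasure Sq {\<omega>'\<in>space Sq. \<forall>b<r. \<bar>real_of_int (bsum L b \<omega>')\<bar> \<le> c}"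
      by (intro emeasure_mono) measurable
    also have "\<dots> \<le> (emeasure Sq ?A) ^ r" by (rule Suc)
    finally show "emeasure Sq {\<omega>'\<in>space Sq. \<forall>b<Suc r. \<bar>real_of_int (bsum L b (comb_seq L \<omega> \<omega>'))\<bar> \<le> c} \<le> (emeasure Sq ?A) ^ r" .
  qed
  then show ?case by (simp add: mult.commute)
qed

end

context RWs begin

lemma tail_bound:
  assumes s2pos: "s2 > 0" and sg: "sg = 1 \<or> sg = -1" and y: "y \<ge> 0"
  shows "\<exists>l. emeasure Sq {\<omega>\<in>space Sq. 0 \<le> y + sg * real_of_int (Z l \<omega>)} \<le> ennreal (63/64)"
proof -
  have m4: "m4 \<ge> 0" unfolding m4_def by (simp add: Bochner_Integration.integral_nonneg)
  define l where "l = nat \<lceil>m4 / s2^2 + 4 * y^2 / s2\<rceil> + 1"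
  have l1: "real l \<ge> m4 / s2^2 + 4 * y^2 / s2" unfolding l_def by linarith
  have lpos: "real l > 0" unfolding l_def by simp
  have "m4 / s2^2 \<le> real l" using l1 s2pos y by (smt (verit) divide_nonneg_pos zero_le_power2)
  then have "m4 \<le> real l * s2^2" using s2pos by (simp add: field_simps)
  then have "real l * m4 \<le> real l * (real l * s2^2)" using lpos by (intro mult_left_mono) auto
  then have m: "real l * m4 \<le> (real l * s2)^2" by (simp add: power2_eq_square mult_ac)
  have V: "real l * s2 > 0" using lpos s2pos by simp
  have "4 * y^2 / s2 \<le> real l" using l1 divide_nonneg_nonneg[OF m4 zero_le_power2[of s2]] by linarith
  then have "4 * y^2 \<le> real l * s2" using s2pos by (simp add: field_simps)
  then have "sqrt (4 * y^2) \<le> sqrt (real l * s2)" by simp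
  then have yt: "y \<le> sqrt (real l * s2) / 2" using y by (simp add: real_sqrt_mult)
  define B where "B = {w::int. 0 \<le> y + sg * real_of_int w}"
  have "measure_pmf.prob (conv p l) (UNIV - B) \<ge> 1/64"
  proof (cases "sg = 1")
    case True
    have "{w. real_of_int w < - (sqrt (real l * s2) / 2)} \<subseteq> UNIV - B"
      using yt True by (auto simp: B_def)
    then have "measure_pmf.prob (conv p l) {w. real_of_int w < - (sqrt (real l * s2) / 2)} \<le> measure_pmf.prob (conv p l) (UNIV - B)"
      by (rule measure_pmf.finite_measure_mono) simp
    then show ?thesis using anti_side(1)[OF V m] by linarith
  next
    case False
    then have sgm: "sg = -1" using sg by simp
    have "{w. real_of_int w > sqrt (real l * s2) / 2} \<subseteq> UNIV - B"
      using yt sgm by (auto simp: B_def)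
    then have "measure_pmf.prob (conv p l) {w. real_of_int w > sqrt (real l * s2) / 2} \<le> measure_pmf.prob (conv p l) (UNIV - B)"
      by (rule measure_pmf.finite_measure_mono) simp
    then show ?thesis using anti_side(2)[OF V m] by linarith
  qed
  then have "measure_pmf.prob (conv p l) B \<le> 63/64"
    using measure_pmf.prob_compl[of B "conv p l"] by (simp add: Compl_eq_Diff_UNIV)
  moreover have "emeasure Sq {\<omega>\<in>space Sq. 0 \<le> y + sg * real_of_int (Z l \<omega>)} = ennreal (measure_pmf.prob (conv p l) B)"
    using emeasure_Z[of l B] by (simp add: B_def measure_pmf.emeasure_eq_measure)
  ultimately show ?thesis by (intro exI[of _ l]) (simp add: ennreal_leI)
qed

lemma no_dip_zero:
  assumes s2pos: "s2 > 0" and sg: "sg = 1 \<or> sg = -1"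
  shows "emeasure Sq {\<omega>\<in>space Sq. \<forall>n. 0 \<le> y + sg * real_of_int (Z n \<omega>)} = 0"
proof -
  define \<rho> where "\<rho> y = emeasure Sq {\<omega>\<in>space Sq. \<forall>n. 0 \<le> y + sg * real_of_int (Z n \<omega>)}" for y
  define R where "R = (SUP y. \<rho> y)"
  have meas: "{\<omega>\<in>space Sq. \<forall>n. 0 \<le> y + sg * real_of_int (Z n \<omega>)} \<in> sets Sq" for y by measurable
  have rR: "\<rho> y \<le> R" for y unfolding R_def by (rule SUP_upper) simp
  have R1: "R \<le> 1" unfolding R_def \<rho>_def by (rule SUP_least) (rule SS.measure_le_1[simplified])
  have step: "\<rho> y \<le> R * ennreal (63/64)" for y
  proof (cases "y < 0")
    case True
    then have eq: "{\<omega>\<in>space Sq. \<forall>n. 0 \<le> y + sg * real_of_int (Z n \<omega>)} = {}"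
      by (auto intro!: exI[of _ 0] simp: Z_def)
    show ?thesis unfolding \<rho>_def eq by simp
  next
    case False
    then obtain l where l: "emeasure Sq {\<omega>\<in>space Sq. 0 \<le> y + sg * real_of_int (Z l \<omega>)} \<le> ennreal (63/64)"
      using tail_bound[OF s2pos sg] by force
    let ?A = "{\<omega>\<in>space Sq. 0 \<le> y + sg * real_of_int (Z l \<omega>)}"
    have "\<rho> y \<le> R * emeasure Sq ?A"
      unfolding \<rho>_def
    proof (rule split_bound[where i=l])
      show "{\<omega>\<in>space Sq. \<forall>n. 0 \<le> y + sg * real_of_int (Z n \<omega>)} \<in> sets Sq" by (rule meas)
      show "?A \<in> sets Sq" by measurable
      fix \<omega> \<omega>' assume "\<forall>n. 0 \<le> y + sg * real_of_int (Z n (comb_seq l \<omega> \<omega>'))"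
      then show "\<omega> \<in> ?A" using Z_comb_le[of l l \<omega> \<omega>'] by (auto dest: spec[of _ l])
    next
      fix \<omega>
      let ?y = "y + sg * real_of_int (Z l \<omega>)"
      have "{\<omega>'\<in>space Sq. \<forall>n. 0 \<le> y + sg * real_of_int (Z n (comb_seq l \<omega> \<omega>'))}
          \<subseteq> {\<omega>'\<in>space Sq. \<forall>n. 0 \<le> ?y + sg * real_of_int (Z n \<omega>')}"
      proof safe
        fix \<omega>' n assume "\<forall>n. 0 \<le> y + sg * real_of_int (Z n (comb_seq l \<omega> \<omega>'))"
        then have "0 \<le> y + sg * real_of_int (Z (l + n) (comb_seq l \<omega> \<omega>'))" by blast
        then show "0 \<le> ?y + sg * real_of_int (Z n \<omega>')" by (simp add: Z_comb_add algebra_simps)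
      qed
      then have "emeasure Sq {\<omega>'\<in>space Sq. \<forall>n. 0 \<le> y + sg * real_of_int (Z n (comb_seq l \<omega> \<omega>'))} \<le> \<rho> ?y"
        unfolding \<rho>_def by (intro emeasure_mono meas)
      also have "\<dots> \<le> R" by (rule rR)
      finally show "emeasure Sq {\<omega>'\<in>space Sq. \<forall>n. 0 \<le> y + sg * real_of_int (Z n (comb_seq l \<omega> \<omega>'))} \<le> R" .
    qed
    also have "\<dots> \<le> R * ennreal (63/64)" using l by (intro mult_left_mono) auto
    finally show ?thesis .
  qed
  have "R \<le> R * ennreal (63/64)" unfolding R_def by (rule SUP_least) (use step R_def in auto)
  moreover have "R \<noteq> \<top>" using R1 by (auto simp: top_unique)
  ultimately have "R = 0"
  proof -
    assume a: "R \<le> R * ennreal (63/64)" "R \<noteq> \<top>"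
    obtain r where r: "R = ennreal r" "r \<ge> 0" using a(2) by (cases R) auto
    have e: "ennreal r * ennreal (63/64) = ennreal (r * (63/64))" using r(2) by (subst ennreal_mult[symmetric]) auto
    have "ennreal r \<le> ennreal (r * (63/64))" using a(1) unfolding r(1) e .
    then have "r \<le> r * (63/64)" using r by (simp add: ennreal_le_iff)
    then have "r = 0" using r by simp
    then show ?thesis using r by simp
  qed
  then show ?thesis using rR[of y] by (simp add: \<rho>_def)
qed

end

lemma Inf_nat_set:
  "Inf {ereal (real k) | k. P k} = (if \<exists>k. P k then ereal (real (LEAST k. P k)) else \<infinity>)"
proof (cases "\<exists>k. P k")
  case True
  show ?thesis
  proof (simp only: True if_True, rule Inf_eqI)
    fix i assume "i \<in> {ereal (real k) | k. P k}"
    then obtain k where "i = ereal (real k)" "P k" by auto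
    then show "ereal (real (LEAST k. P k)) \<le> i" by (simp add: Least_le)
  next
    fix y assume "\<And>i. i \<in> {ereal (real k) | k. P k} \<Longrightarrow> y \<le> i"
    moreover have "ereal (real (LEAST k. P k)) \<in> {ereal (real k) | k. P k}"
      using True by (auto intro: LeastI_ex)
    ultimately show "y \<le> ereal (real (LEAST k. P k))" by blast
  qed
next
  case False then show ?thesis by (simp add: top_ereal_def)
qed

lemma Least_local:
  fixes P P' :: "nat \<Rightarrow> bool"
  assumes agree: "\<And>k. k \<le> n \<Longrightarrow> P k = P' k" and ex: "\<exists>k. P k" and le: "(LEAST k. P k) \<le> n"
  shows "(\<exists>k. P' k) \<and> (LEAST k. P' k) = (LEAST k. P k)"
proof -
  let ?k = "LEAST k. P k"
  have P: "P ?k" using ex by (rule LeastI_ex)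
  then have P': "P' ?k" using agree le by simp
  have "\<And>k. k < ?k \<Longrightarrow> \<not> P' k"
    using agree le not_less_Least by (metis less_imp_le order.trans)
  then have "(LEAST k. P' k) = ?k" using P' by (intro Least_equality) (auto simp: not_less[symmetric])
  then show ?thesis using P' by auto
qed

definition Rr :: "nat \<Rightarrow> real" where "Rr N = 2 * real N powr (5/6)"
definition aa :: "nat \<Rightarrow> real" where "aa N = real N powr (5/6)"

lemma S_time_eq: "S_time N X t = (if \<exists>k. t < ereal (real k) \<and> Rr N < real_of_int \<bar>X k\<bar>
   then ereal (real (LEAST k. t < ereal (real k) \<and> Rr N < real_of_int \<bar>X k\<bar>)) else \<infinity>)"
  unfolding S_time_def Rr_def by (rule Inf_nat_set)

lemma T_time_Suc_eq: "T_time N X (Suc m) = (let s = S_time N X (T_time N X m) in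
   if \<exists>k. s < ereal (real k) \<and> real_of_int \<bar>X k\<bar> < real_of_int \<bar>X (nat \<lfloor>real_of_ereal s\<rfloor>)\<bar> - aa N
   then ereal (real (LEAST k. s < ereal (real k) \<and> real_of_int \<bar>X k\<bar> < real_of_int \<bar>X (nat \<lfloor>real_of_ereal s\<rfloor>)\<bar> - aa N)) else \<infinity>)"
  unfolding T_time.simps Let_def aa_def by (rule Inf_nat_set)

lemma S_time_local:
  assumes agree: "\<And>k. k \<le> n \<Longrightarrow> X k = X' k" and le: "S_time N X t \<le> ereal (real n)"
  shows "S_time N X' t = S_time N X t"
proof -
  let ?P = "\<lambda>X k. t < ereal (real k) \<and> Rr N < real_of_int \<bar>X k\<bar>"
  have ex: "\<exists>k. ?P X k" using le by (auto simp: S_time_eq split: if_splits)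
  then have "(LEAST k. ?P X k) \<le> n" using le by (simp add: S_time_eq)
  from Least_local[of n "?P X" "?P X'", OF _ ex this] agree
  show ?thesis using ex by (simp add: S_time_eq)
qed

lemma S_time_fin0:
  assumes "S_time N X t \<noteq> \<infinity>"
  shows "\<exists>s. S_time N X t = ereal (real s) \<and> Rr N < real_of_int \<bar>X s\<bar> \<and> t < ereal (real s)"
proof -
  let ?P = "\<lambda>k. t < ereal (real k) \<and> Rr N < real_of_int \<bar>X k\<bar>"
  have ex: "\<exists>k. ?P k" using assms by (auto simp: S_time_eq split: if_splits)
  have "?P (LEAST k. ?P k)" using ex by (rule LeastI_ex)
  moreover have "S_time N X t = ereal (real (LEAST k. ?P k))" using ex by (simp add: S_time_eq)
  ultimately show ?thesis by blast
qed

lemma S_time_gt: "S_time N X t \<noteq> \<infinity> \<Longrightarrow> t < S_time N X t"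
  using S_time_fin0 by fastforce

lemma S_time_fin: "S_time N X t \<noteq> \<infinity> \<Longrightarrow> \<exists>s. S_time N X t = ereal (real s) \<and> Rr N < real_of_int \<bar>X s\<bar>"
  using S_time_fin0 by fastforce

lemma T_time_Suc_fin0:
  assumes "T_time N X (Suc m) \<noteq> \<infinity>"
  shows "\<exists>k. T_time N X (Suc m) = ereal (real k) \<and> S_time N X (T_time N X m) < ereal (real k)"
proof -
  let ?s = "S_time N X (T_time N X m)"
  let ?P = "\<lambda>k. ?s < ereal (real k) \<and> real_of_int \<bar>X k\<bar> < real_of_int \<bar>X (nat \<lfloor>real_of_ereal ?s\<rfloor>)\<bar> - aa N"
  have ex: "\<exists>k. ?P k" using assms unfolding T_time_Suc_eq Let_def by (auto split: if_splits)
  have "?P (LEAST k. ?P k)" using ex by (rule LeastI_ex)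
  moreover have "T_time N X (Suc m) = ereal (real (LEAST k. ?P k))" using ex unfolding T_time_Suc_eq Let_def by simp
  ultimately show ?thesis by blast
qed

lemma T_time_Suc_gt: "T_time N X (Suc m) \<noteq> \<infinity> \<Longrightarrow> S_time N X (T_time N X m) < T_time N X (Suc m)"
  using T_time_Suc_fin0 by fastforce

lemma T_time_local:
  assumes agree: "\<And>k. k \<le> n \<Longrightarrow> X k = X' k"
  shows "T_time N X m \<le> ereal (real n) \<Longrightarrow> T_time N X' m = T_time N X m"
proof (induction m)
  case 0 show ?case by simp
next
  case (Suc m)
  let ?s = "S_time N X (T_time N X m)"
  have fin: "T_time N X (Suc m) \<noteq> \<infinity>" using Suc.prems by auto
  have sl: "?s < T_time N X (Suc m)" by (rule T_time_Suc_gt[OF fin])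
  then have sle: "?s \<le> ereal (real n)" using Suc.prems by simp
  have sfin: "?s \<noteq> \<infinity>" using sl by auto
  have "T_time N X m < ?s" by (rule S_time_gt[OF sfin])
  then have "T_time N X m \<le> ereal (real n)" using sle by simp
  then have teq: "T_time N X' m = T_time N X m" by (rule Suc.IH)
  have seq: "S_time N X' (T_time N X' m) = ?s" unfolding teq by (rule S_time_local[OF agree sle])
  obtain s0 where s0: "?s = ereal (real s0)" using S_time_fin[OF sfin] by auto
  have s0n: "s0 \<le> n" using sle s0 by simp
  let ?P = "\<lambda>X k. ereal (real s0) < ereal (real k) \<and> real_of_int \<bar>X k\<bar> < real_of_int \<bar>X s0\<bar> - aa N"
  have ex: "\<exists>k. ?P X k" using fin unfolding T_time_Suc_eq Let_def s0 by (auto split: if_splits)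
  have le: "(LEAST k. ?P X k) \<le> n" using Suc.prems ex unfolding T_time_Suc_eq Let_def s0 by simp
  have ag: "\<And>k. k \<le> n \<Longrightarrow> ?P X k = ?P X' k" using agree s0n by simp
  from Least_local[of n "?P X" "?P X'", OF ag ex le]
  show ?case using ex unfolding T_time_Suc_eq Let_def seq s0 by simp
qed

lemma S_T_local:
  assumes agree: "\<And>k. k \<le> n \<Longrightarrow> X k = X' k"
    and le: "S_time N X (T_time N X m) \<le> ereal (real n)"
  shows "S_time N X' (T_time N X' m) = S_time N X (T_time N X m)"
proof -
  have sfin: "S_time N X (T_time N X m) \<noteq> \<infinity>" using le by auto
  have "T_time N X m < S_time N X (T_time N X m)" by (rule S_time_gt[OF sfin])
  then have "T_time N X m \<le> ereal (real n)" using le by (meson less_imp_le order.trans)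
  then have "T_time N X' m = T_time N X m" using T_time_local[of n X X' N m] agree by blast
  then show ?thesis using S_time_local[OF agree le] by simp
qed


definition notIn :: "nat \<Rightarrow> nat \<Rightarrow> (nat \<Rightarrow> int) \<Rightarrow> nat \<Rightarrow> bool" where
  "notIn N \<tau> X m \<longleftrightarrow> (\<forall>i. T_time N X m = ereal (real i) - 1 \<longrightarrow> (\<exists>n<\<tau>. Rr N < real_of_int \<bar>X (i + n)\<bar>))"

definition notND :: "nat \<Rightarrow> (nat \<Rightarrow> int) \<Rightarrow> nat \<Rightarrow> bool" where
  "notND N X m \<longleftrightarrow> (\<forall>s. S_time N X (T_time N X m) = ereal (real s) \<longrightarrow>
      (\<exists>k. s < k \<and> real_of_int \<bar>X k\<bar> < real_of_int \<bar>X s\<bar> - aa N))"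

lemma step_S:
  assumes T: "T_time N X m = ereal (real i) - 1" and nI: "notIn N \<tau> X m"
  shows "\<exists>s. S_time N X (T_time N X m) = ereal (real s) \<and> S_time N X (T_time N X m) - T_time N X m \<le> ereal (real \<tau>)"
proof -
  obtain n where n: "n < \<tau>" "Rr N < real_of_int \<bar>X (i + n)\<bar>" using nI T unfolding notIn_def by blast
  let ?P = "\<lambda>k. T_time N X m < ereal (real k) \<and> Rr N < real_of_int \<bar>X k\<bar>"
  have Pin: "?P (i + n)" using n T by (simp add: one_ereal_def)
  then have ex: "\<exists>k. ?P k" by blast
  have le: "(LEAST k. ?P k) \<le> i + n" using Pin by (rule Least_le)
  have S: "S_time N X (T_time N X m) = ereal (real (LEAST k. ?P k))" using ex by (simp add: S_time_eq)
  have "ereal (real (LEAST k. ?P k)) - (ereal (real i) - 1) = ereal (real (LEAST k. ?P k) - real i + 1)" by (simp add: one_ereal_def)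
  also have "\<dots> \<le> ereal (real \<tau>)" using le n(1) by simp
  finally show ?thesis using S T by auto
qed

lemma step_T:
  assumes S: "S_time N X (T_time N X m) = ereal (real s)" and nN: "notND N X m"
  shows "\<exists>i. T_time N X (Suc m) = ereal (real i) - 1"
proof -
  obtain k where k: "s < k" "real_of_int \<bar>X k\<bar> < real_of_int \<bar>X s\<bar> - aa N" using nN S unfolding notND_def by blast
  let ?P = "\<lambda>k. ereal (real s) < ereal (real k) \<and> real_of_int \<bar>X k\<bar> < real_of_int \<bar>X s\<bar> - aa N"
  have ex: "\<exists>k. ?P k" using k by auto
  have "T_time N X (Suc m) = ereal (real (LEAST k. ?P k))" using ex unfolding T_time_Suc_eq Let_def S by simp
  then have "T_time N X (Suc m) = ereal (real (Suc (LEAST k. ?P k))) - 1" by (simp add: one_ereal_def del: T_time.simps)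
  then show ?thesis by blast
qed

lemma det_bound:
  assumes H: "\<And>m. m \<le> j \<Longrightarrow> notIn N \<tau> X m \<and> notND N X m"
  shows "B_sum N X j \<le> ereal (real (Suc j) * real \<tau>)"
proof -
  have Ti: "m \<le> j \<Longrightarrow> \<exists>i. T_time N X m = ereal (real i) - 1" for m
  proof (induction m)
    case 0 then show ?case by (intro exI[of _ 0]) (simp add: one_ereal_def zero_ereal_def[symmetric])
  next
    case (Suc m)
    then obtain i where i: "T_time N X m = ereal (real i) - 1" by auto
    have mj: "m \<le> j" using Suc.prems by simp
    obtain s where s: "S_time N X (T_time N X m) = ereal (real s)" using step_S[OF i conjunct1[OF H[OF mj]]] by blast
    show ?case using step_T[OF s conjunct2[OF H[OF mj]]] .
  qed
  have "B_sum N X j \<le> (\<Sum>m\<le>j. ereal (real \<tau>))"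
    unfolding B_sum_def
  proof (rule sum_mono)
    fix m assume "m \<in> {..j}"
    then have mj: "m \<le> j" by simp
    obtain i where i: "T_time N X m = ereal (real i) - 1" using Ti[OF mj] by blast
    show "S_time N X (T_time N X m) - T_time N X m \<le> ereal (real \<tau>)"
      using step_S[OF i] H[OF mj] by blast
  qed
  also have "\<dots> = ereal (real (Suc j) * real \<tau>)" by simp
  finally show ?thesis .
qed


context RW begin

lemma walk_meas_int[measurable]: "(\<lambda>\<omega>. walk x \<omega> k) \<in> measurable Sq (count_space UNIV)"
  unfolding walk_Z using measurable_compose[OF Z_meas, of "\<lambda>z. x + z" "count_space UNIV"] by simp

lemma walk_meas[measurable]: "(\<lambda>\<omega>. real_of_int (walk x \<omega> k)) \<in> borel_measurable Sq"
  unfolding walk_Z by simp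

lemma walk_meas_idx:
  assumes g: "g \<in> measurable Sq (count_space UNIV)"
  shows "(\<lambda>\<omega>. real_of_int (walk x \<omega> (g \<omega>))) \<in> borel_measurable Sq"
  by (rule measurable_compose_countable[OF walk_meas g])

lemma S_meas:
  assumes [measurable]: "t \<in> borel_measurable Sq"
  shows "(\<lambda>\<omega>. S_time N (walk x \<omega>) (t \<omega>)) \<in> borel_measurable Sq"
proof -
  have [measurable]: "(\<lambda>\<omega>. LEAST k. t \<omega> < ereal (real k) \<and> Rr N < real_of_int \<bar>walk x \<omega> k\<bar>) \<in> measurable Sq (count_space UNIV)"
    by measurable
  show ?thesis unfolding S_time_eq by measurable
qed

lemma ST_meas:
  "(\<lambda>\<omega>. T_time N (walk x \<omega>) m) \<in> borel_measurable Sq \<and> (\<lambda>\<omega>. S_time N (walk x \<omega>) (T_time N (walk x \<omega>) m)) \<in> borel_measurable Sq"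
proof (induction m)
  case 0 then show ?case using S_meas[of "\<lambda>_. -1"] by simp
next
  case (Suc m)
  let ?s = "\<lambda>\<omega>. S_time N (walk x \<omega>) (T_time N (walk x \<omega>) m)"
  have s[measurable]: "?s \<in> borel_measurable Sq" using Suc by simp
  have g[measurable]: "(\<lambda>\<omega>. nat \<lfloor>real_of_ereal (?s \<omega>)\<rfloor>) \<in> measurable Sq (count_space UNIV)"
    by measurable
  have w[measurable]: "(\<lambda>\<omega>. real_of_int (walk x \<omega> (nat \<lfloor>real_of_ereal (?s \<omega>)\<rfloor>))) \<in> borel_measurable Sq"
    by (rule walk_meas_idx[OF g])
  have [measurable]: "(\<lambda>\<omega>. LEAST k. ?s \<omega> < ereal (real k) \<and> real_of_int \<bar>walk x \<omega> k\<bar> < real_of_int \<bar>walk x \<omega> (nat \<lfloor>real_of_ereal (?s \<omega>)\<rfloor>)\<bar> - aa N) \<in> measurable Sq (count_space UNIV)"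
    by measurable
  have T: "(\<lambda>\<omega>. T_time N (walk x \<omega>) (Suc m)) \<in> borel_measurable Sq"
    unfolding T_time_Suc_eq Let_def by measurable
  then show ?case using S_meas[OF T] by simp
qed

lemma B_meas: "(\<lambda>\<omega>. B_sum N (walk x \<omega>) j) \<in> borel_measurable Sq"
  unfolding B_sum_def
  by (intro borel_measurable_ereal_sum borel_measurable_ereal_diff) (use ST_meas in blast)+

end

lemma walk_comb_le: "k \<le> i \<Longrightarrow> walk x (comb_seq i \<omega> \<omega>') k = walk x \<omega> k"
  by (simp add: walk_Z Z_comb_le)

lemma walk_comb_add: "walk x (comb_seq i \<omega> \<omega>') (i + n) = walk x \<omega> i + Z n \<omega>'"
  by (simp add: walk_Z Z_comb_add)

definition In_set :: "nat \<Rightarrow> int \<Rightarrow> nat \<Rightarrow> nat \<Rightarrow> nat \<Rightarrow> (nat \<Rightarrow> int) set" where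
  "In_set N x \<tau> m i = {\<omega>. T_time N (walk x \<omega>) m = ereal (real i) - 1 \<and>
      (\<forall>n<\<tau>. \<bar>real_of_int (walk x \<omega> (i + n))\<bar> \<le> Rr N)}"

definition ND_set :: "nat \<Rightarrow> int \<Rightarrow> real \<Rightarrow> nat \<Rightarrow> nat \<Rightarrow> (nat \<Rightarrow> int) set" where
  "ND_set N x sg m s = {\<omega>. S_time N (walk x \<omega>) (T_time N (walk x \<omega>) m) = ereal (real s) \<and>
      (\<forall>n. 0 \<le> aa N + sg * real_of_int (walk x \<omega> (s + n) - walk x \<omega> s))}"

context RW begin

lemma In_set_meas[measurable]: "In_set N x \<tau> m i \<in> sets Sq"
proof -
  have [measurable]: "(\<lambda>\<omega>. T_time N (walk x \<omega>) m) \<in> borel_measurable Sq" using ST_meas by blast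
  have "In_set N x \<tau> m i = {\<omega>\<in>space Sq. T_time N (walk x \<omega>) m = ereal (real i) - 1 \<and>
      (\<forall>n<\<tau>. \<bar>real_of_int (walk x \<omega> (i + n))\<bar> \<le> Rr N)}" by (simp add: In_set_def)
  also have "\<dots> \<in> sets Sq" by measurable
  finally show ?thesis .
qed

lemma ND_set_meas[measurable]: "ND_set N x sg m s \<in> sets Sq"
proof -
  have [measurable]: "(\<lambda>\<omega>. S_time N (walk x \<omega>) (T_time N (walk x \<omega>) m)) \<in> borel_measurable Sq" using ST_meas by blast
  have "ND_set N x sg m s = {\<omega>\<in>space Sq. S_time N (walk x \<omega>) (T_time N (walk x \<omega>) m) = ereal (real s) \<and>
      (\<forall>n. 0 \<le> aa N + sg * (real_of_int (walk x \<omega> (s + n)) - real_of_int (walk x \<omega> s)))}" by (simp add: ND_set_def)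
  also have "\<dots> \<in> sets Sq" by measurable
  finally show ?thesis .
qed

lemma In_set_i_bound:
  assumes rL: "r * L < \<tau>"
  shows "emeasure Sq (In_set N x \<tau> m i) \<le>
     (emeasure Sq {\<omega>\<in>space Sq. \<bar>real_of_int (Z L \<omega>)\<bar> \<le> 2 * Rr N}) ^ r *
     emeasure Sq {\<omega>\<in>space Sq. T_time N (walk x \<omega>) m = ereal (real i) - 1}"
proof -
  have [measurable]: "(\<lambda>\<omega>. T_time N (walk x \<omega>) m) \<in> borel_measurable Sq" using ST_meas by blast
  have eq: "In_set N x \<tau> m i = {\<omega>\<in>space Sq. T_time N (walk x \<omega>) m = ereal (real i) - 1 \<and>
      (\<forall>n<\<tau>. \<bar>real_of_int (walk x \<omega> (i + n))\<bar> \<le> Rr N)}" by (simp add: In_set_def)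
  show ?thesis unfolding eq
  proof (rule split_bound[where i=i])
    show "{\<omega>\<in>space Sq. T_time N (walk x \<omega>) m = ereal (real i) - 1 \<and>
      (\<forall>n<\<tau>. \<bar>real_of_int (walk x \<omega> (i + n))\<bar> \<le> Rr N)} \<in> sets Sq" by measurable
    show "{\<omega>\<in>space Sq. T_time N (walk x \<omega>) m = ereal (real i) - 1} \<in> sets Sq" by measurable
  next
    fix \<omega> \<omega>'
    assume a: "T_time N (walk x (comb_seq i \<omega> \<omega>')) m = ereal (real i) - 1 \<and>
      (\<forall>n<\<tau>. \<bar>real_of_int (walk x (comb_seq i \<omega> \<omega>') (i + n))\<bar> \<le> Rr N)"
    have le: "T_time N (walk x (comb_seq i \<omega> \<omega>')) m \<le> ereal (real i)"
      using a by (simp add: one_ereal_def)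
    have "T_time N (walk x \<omega>) m = T_time N (walk x (comb_seq i \<omega> \<omega>')) m"
      using T_time_local[of i "walk x (comb_seq i \<omega> \<omega>')" "walk x \<omega>" N m] walk_comb_le le by blast
    then show "\<omega> \<in> {\<omega>\<in>space Sq. T_time N (walk x \<omega>) m = ereal (real i) - 1}" using a by simp
  next
    fix \<omega>
    let ?y = "walk x \<omega> i"
    have "{\<omega>'\<in>space Sq. T_time N (walk x (comb_seq i \<omega> \<omega>')) m = ereal (real i) - 1 \<and>
      (\<forall>n<\<tau>. \<bar>real_of_int (walk x (comb_seq i \<omega> \<omega>') (i + n))\<bar> \<le> Rr N)}
      \<subseteq> {\<omega>'\<in>space Sq. \<forall>b<r. \<bar>real_of_int (bsum L b \<omega>')\<bar> \<le> 2 * Rr N}"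
    proof safe
      fix \<omega>' b
      assume a: "\<forall>n<\<tau>. \<bar>real_of_int (walk x (comb_seq i \<omega> \<omega>') (i + n))\<bar> \<le> Rr N" and b: "b < r"
      have h: "n < \<tau> \<Longrightarrow> \<bar>real_of_int ?y + real_of_int (Z n \<omega>')\<bar> \<le> Rr N" for n
        using a walk_comb_add[of x i \<omega> \<omega>' n] by fastforce
      have "Suc b * L \<le> r * L" using b by (intro mult_right_mono) auto
      then have i1: "Suc b * L < \<tau>" and i2: "b * L < \<tau>" using rL by (auto intro: le_less_trans)
      have "\<bar>real_of_int (bsum L b \<omega>')\<bar> = \<bar>(real_of_int ?y + real_of_int (Z (Suc b * L) \<omega>')) - (real_of_int ?y + real_of_int (Z (b * L) \<omega>'))\<bar>"
        by (simp add: bsum_def)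
      also have "\<dots> \<le> Rr N + Rr N" using h[OF i1] h[OF i2] by linarith
      finally show "\<bar>real_of_int (bsum L b \<omega>')\<bar> \<le> 2 * Rr N" by simp
    qed
    then have "emeasure Sq {\<omega>'\<in>space Sq. T_time N (walk x (comb_seq i \<omega> \<omega>')) m = ereal (real i) - 1 \<and>
      (\<forall>n<\<tau>. \<bar>real_of_int (walk x (comb_seq i \<omega> \<omega>') (i + n))\<bar> \<le> Rr N)}
      \<le> emeasure Sq {\<omega>'\<in>space Sq. \<forall>b<r. \<bar>real_of_int (bsum L b \<omega>')\<bar> \<le> 2 * Rr N}"
      by (intro emeasure_mono) measurable
    also have "\<dots> \<le> (emeasure Sq {\<omega>\<in>space Sq. \<bar>real_of_int (Z L \<omega>)\<bar> \<le> 2 * Rr N}) ^ r"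
      by (rule blocks_bound)
    finally show "emeasure Sq {\<omega>'\<in>space Sq. T_time N (walk x (comb_seq i \<omega> \<omega>')) m = ereal (real i) - 1 \<and>
      (\<forall>n<\<tau>. \<bar>real_of_int (walk x (comb_seq i \<omega> \<omega>') (i + n))\<bar> \<le> Rr N)}
      \<le> (emeasure Sq {\<omega>\<in>space Sq. \<bar>real_of_int (Z L \<omega>)\<bar> \<le> 2 * Rr N}) ^ r" .
  qed
qed

lemma In_bound:
  assumes rL: "r * L < \<tau>"
    and b: "emeasure Sq {\<omega>\<in>space Sq. \<bar>real_of_int (Z L \<omega>)\<bar> \<le> 2 * Rr N} \<le> ennreal \<beta>" and b0: "\<beta> \<ge> 0"
  shows "emeasure Sq (\<Union>i. In_set N x \<tau> m i) \<le> ennreal (\<beta> ^ r)"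
proof -
  have [measurable]: "(\<lambda>\<omega>. T_time N (walk x \<omega>) m) \<in> borel_measurable Sq" using ST_meas by blast
  let ?A = "\<lambda>i. {\<omega>\<in>space Sq. T_time N (walk x \<omega>) m = ereal (real i) - 1}"
  have Ai: "?A i \<in> sets Sq" for i by measurable
  have Am: "range ?A \<subseteq> sets Sq" using Ai by blast
  have disj: "disjoint_family ?A" by (auto simp: disjoint_family_on_def one_ereal_def)
  have br: "(emeasure Sq {\<omega>\<in>space Sq. \<bar>real_of_int (Z L \<omega>)\<bar> \<le> 2 * Rr N}) ^ r \<le> ennreal (\<beta> ^ r)"
    using b b0 by (simp add: ennreal_power[symmetric] power_mono)
  have "emeasure Sq (\<Union>i. In_set N x \<tau> m i) \<le> (\<Sum>i. emeasure Sq (In_set N x \<tau> m i))"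
    by (rule emeasure_subadditive_countably) auto
  also have "\<dots> \<le> (\<Sum>i. ennreal (\<beta> ^ r) * emeasure Sq (?A i))"
    by (intro suminf_le summableI order.trans[OF In_set_i_bound[OF rL]] mult_right_mono br) auto
  also have "\<dots> = ennreal (\<beta> ^ r) * (\<Sum>i. emeasure Sq (?A i))"
    by (rule ennreal_suminf_cmult)
  also have "\<dots> = ennreal (\<beta> ^ r) * emeasure Sq (\<Union>i. ?A i)"
    using suminf_emeasure[OF Am disj] by simp
  also have "\<dots> \<le> ennreal (\<beta> ^ r) * 1"
    by (intro mult_left_mono) (auto simp: SS.measure_le_1[simplified])
  finally show ?thesis by simp
qed

end

context RWs begin

lemma ND_zero:
  assumes s2pos: "s2 > 0" and sg: "sg = 1 \<or> sg = -1"
  shows "emeasure Sq (ND_set N x sg m s) = 0"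
proof -
  have [measurable]: "(\<lambda>\<omega>. S_time N (walk x \<omega>) (T_time N (walk x \<omega>) m)) \<in> borel_measurable Sq" using ST_meas by blast
  let ?A = "{\<omega>\<in>space Sq. S_time N (walk x \<omega>) (T_time N (walk x \<omega>) m) = ereal (real s)}"
  have eq: "ND_set N x sg m s = {\<omega>\<in>space Sq. S_time N (walk x \<omega>) (T_time N (walk x \<omega>) m) = ereal (real s) \<and>
      (\<forall>n. 0 \<le> aa N + sg * real_of_int (walk x \<omega> (s + n) - walk x \<omega> s))}" by (simp add: ND_set_def)
  have "emeasure Sq (ND_set N x sg m s) \<le> 0 * emeasure Sq ?A"
    unfolding eq
  proof (rule split_bound[where i=s])
    show "{\<omega>\<in>space Sq. S_time N (walk x \<omega>) (T_time N (walk x \<omega>) m) = ereal (real s) \<and>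
      (\<forall>n. 0 \<le> aa N + sg * real_of_int (walk x \<omega> (s + n) - walk x \<omega> s))} \<in> sets Sq"
      using ND_set_meas[of N x sg m s] eq by simp
    show "?A \<in> sets Sq" by measurable
  next
    fix \<omega> \<omega>'
    assume a: "S_time N (walk x (comb_seq s \<omega> \<omega>')) (T_time N (walk x (comb_seq s \<omega> \<omega>')) m) = ereal (real s) \<and>
      (\<forall>n. 0 \<le> aa N + sg * real_of_int (walk x (comb_seq s \<omega> \<omega>') (s + n) - walk x (comb_seq s \<omega> \<omega>') s))"
    have "S_time N (walk x \<omega>) (T_time N (walk x \<omega>) m) = S_time N (walk x (comb_seq s \<omega> \<omega>')) (T_time N (walk x (comb_seq s \<omega> \<omega>')) m)"
      using S_T_local[of s "walk x (comb_seq s \<omega> \<omega>')" "walk x \<omega>" N m] walk_comb_le a by auto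
    then show "\<omega> \<in> ?A" using a by simp
  next
    fix \<omega>
    have "{\<omega>'\<in>space Sq. S_time N (walk x (comb_seq s \<omega> \<omega>')) (T_time N (walk x (comb_seq s \<omega> \<omega>')) m) = ereal (real s) \<and>
      (\<forall>n. 0 \<le> aa N + sg * real_of_int (walk x (comb_seq s \<omega> \<omega>') (s + n) - walk x (comb_seq s \<omega> \<omega>') s))}
      \<subseteq> {\<omega>'\<in>space Sq. \<forall>n. 0 \<le> aa N + sg * real_of_int (Z n \<omega>')}"
      using walk_comb_add[of x s \<omega>] walk_comb_le[of s s x \<omega>] by auto
    then have "emeasure Sq {\<omega>'\<in>space Sq. S_time N (walk x (comb_seq s \<omega> \<omega>')) (T_time N (walk x (comb_seq s \<omega> \<omega>')) m) = ereal (real s) \<and>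
      (\<forall>n. 0 \<le> aa N + sg * real_of_int (walk x (comb_seq s \<omega> \<omega>') (s + n) - walk x (comb_seq s \<omega> \<omega>') s))}
      \<le> emeasure Sq {\<omega>'\<in>space Sq. \<forall>n. 0 \<le> aa N + sg * real_of_int (Z n \<omega>')}"
      by (intro emeasure_mono) measurable
    also have "\<dots> = 0" by (rule no_dip_zero[OF s2pos sg])
    finally show "emeasure Sq {\<omega>'\<in>space Sq. S_time N (walk x (comb_seq s \<omega> \<omega>')) (T_time N (walk x (comb_seq s \<omega> \<omega>')) m) = ereal (real s) \<and>
      (\<forall>n. 0 \<le> aa N + sg * real_of_int (walk x (comb_seq s \<omega> \<omega>') (s + n) - walk x (comb_seq s \<omega> \<omega>') s))} \<le> 0" .
  qed
  then show ?thesis by simp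
qed

end

lemma Rr_aa: "Rr N = 2 * aa N" by (simp add: Rr_def aa_def)

lemma det2:
  fixes a J :: real
  assumes jump: "\<And>i. \<bar>real_of_int (\<omega> i)\<bar> \<le> J" and J: "J \<le> 2 * a" and a: "a > 0"
    and big: "2 * a < real_of_int \<bar>walk x \<omega> s\<bar>"
    and stay: "\<And>k. s < k \<Longrightarrow> real_of_int \<bar>walk x \<omega> s\<bar> - a \<le> real_of_int \<bar>walk x \<omega> k\<bar>"
  shows "(\<forall>n. 0 \<le> a + 1 * real_of_int (walk x \<omega> (s + n) - walk x \<omega> s)) \<or>
         (\<forall>n. 0 \<le> a + (-1) * real_of_int (walk x \<omega> (s + n) - walk x \<omega> s))"
proof -
  define X where "X k = real_of_int (walk x \<omega> k)" for k
  have step: "X (Suc k) = X k + real_of_int (\<omega> k)" for k by (simp add: X_def walk_def)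
  have stay': "\<And>k. s < k \<Longrightarrow> \<bar>X s\<bar> - a \<le> \<bar>X k\<bar>" using stay by (simp add: X_def)
  have big': "2 * a < \<bar>X s\<bar>" using big by (simp add: X_def)
  show ?thesis
  proof (cases "X s > 0")
    case True
    have h: "\<forall>n. X s - a \<le> X (s + n)"
    proof
      fix n show "X s - a \<le> X (s + n)"
      proof (induction n)
        case 0 then show ?case using a by simp
      next
        case (Suc n)
        have "X (s + Suc n) \<ge> X (s + n) - J" using step[of "s + n"] jump[of "s + n"] by simp
        then have "X (s + Suc n) > - (X s - a)" using Suc J True big' by simp
        moreover have "X s - a \<le> \<bar>X (s + Suc n)\<bar>" using stay'[of "s + Suc n"] True by simp
        ultimately show ?case by (simp add: abs_if split: if_splits)
      qed
    qed
    have "\<forall>n. 0 \<le> a + 1 * real_of_int (walk x \<omega> (s + n) - walk x \<omega> s)"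
    proof
      fix n show "0 \<le> a + 1 * real_of_int (walk x \<omega> (s + n) - walk x \<omega> s)" using h[rule_format, of n] by (simp add: X_def)
    qed
    then show ?thesis by blast
  next
    case False
    then have neg: "X s < 0" using big' a by (cases "X s = 0") auto
    have h: "\<forall>n. X (s + n) \<le> X s + a"
    proof
      fix n show "X (s + n) \<le> X s + a"
      proof (induction n)
        case 0 then show ?case using a by simp
      next
        case (Suc n)
        have "X (s + Suc n) \<le> X (s + n) + J" using step[of "s + n"] jump[of "s + n"] by simp
        then have "X (s + Suc n) < - (X s + a)" using Suc J neg big' by simp
        moreover have "- X s - a \<le> \<bar>X (s + Suc n)\<bar>" using stay'[of "s + Suc n"] neg by simp
        ultimately show ?case by (simp add: abs_if split: if_splits)
      qed
    qed
    have "\<forall>n. 0 \<le> a + (-1) * real_of_int (walk x \<omega> (s + n) - walk x \<omega> s)"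
    proof
      fix n show "0 \<le> a + (-1) * real_of_int (walk x \<omega> (s + n) - walk x \<omega> s)" using h[rule_format, of n] by (simp add: X_def)
    qed
    then show ?thesis by blast
  qed
qed


context RWs begin

lemma main_fixed:
  assumes s2pos: "s2 > 0"
    and Jz: "\<And>z. J < \<bar>real_of_int z\<bar> \<Longrightarrow> pmf p z = 0" and J: "J \<le> 2 * aa N" and a: "aa N > 0"
    and b: "emeasure Sq {\<omega>\<in>space Sq. \<bar>real_of_int (Z L \<omega>)\<bar> \<le> 2 * Rr N} \<le> ennreal \<beta>" and b0: "\<beta> \<ge> 0"
    and rL: "r * L < \<tau>"
  shows "emeasure Sq {\<omega>\<in>space Sq. ereal (real (Suc j) * real \<tau>) < B_sum N (walk x \<omega>) j}
     \<le> ennreal (real (Suc j) * \<beta> ^ r)"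
proof -
  define Bad where "Bad = (\<Union>i. {\<omega>\<in>space Sq. \<omega> i \<in> {z. J < \<bar>real_of_int z\<bar>}})"
  define U where "U = (\<Union>m\<in>{..j}. (\<Union>i. In_set N x \<tau> m i) \<union> (\<Union>s. ND_set N x 1 m s) \<union> (\<Union>s. ND_set N x (-1) m s))"
  have Badm: "{\<omega>\<in>space Sq. \<omega> i \<in> {z. J < \<bar>real_of_int z\<bar>}} \<in> sets Sq" for i by measurable
  have Bad0: "emeasure Sq Bad = 0"
  proof -
    have "emeasure Sq Bad \<le> (\<Sum>i. emeasure Sq {\<omega>\<in>space Sq. \<omega> i \<in> {z. J < \<bar>real_of_int z\<bar>}})"
      unfolding Bad_def by (rule emeasure_subadditive_countably) (use Badm in blast)
    also have "\<dots> = (\<Sum>i. 0)"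
    proof (intro suminf_cong)
      fix i
      have "emeasure Sq {\<omega>\<in>space Sq. \<omega> i \<in> {z. J < \<bar>real_of_int z\<bar>}} = emeasure (measure_pmf p) {z. J < \<bar>real_of_int z\<bar>}"
        by (rule SS.emeasure_PiM_Collect_single) auto
      also have "\<dots> = 0"
        using Jz by (auto simp: measure_pmf.emeasure_eq_measure measure_pmf_zero_iff set_pmf_iff)
      finally show "emeasure Sq {\<omega>\<in>space Sq. \<omega> i \<in> {z. J < \<bar>real_of_int z\<bar>}} = 0" .
    qed
    finally show ?thesis by simp
  qed
  have Um: "U \<in> sets Sq" unfolding U_def by measurable
  have Badm': "Bad \<in> sets Sq" unfolding Bad_def using Badm by blast
  have incl: "{\<omega>\<in>space Sq. ereal (real (Suc j) * real \<tau>) < B_sum N (walk x \<omega>) j} \<subseteq> Bad \<union> U"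
  proof
    fix \<omega> assume w: "\<omega> \<in> {\<omega>\<in>space Sq. ereal (real (Suc j) * real \<tau>) < B_sum N (walk x \<omega>) j}"
    show "\<omega> \<in> Bad \<union> U"
    proof (rule ccontr)
      assume nw: "\<omega> \<notin> Bad \<union> U"
      then have jump: "\<bar>real_of_int (\<omega> i)\<bar> \<le> J" for i unfolding Bad_def by (auto simp: not_less)
      have H: "notIn N \<tau> (walk x \<omega>) m \<and> notND N (walk x \<omega>) m" if mj: "m \<le> j" for m
      proof
        show "notIn N \<tau> (walk x \<omega>) m"
          unfolding notIn_def
        proof (intro allI impI)
          fix i assume T: "T_time N (walk x \<omega>) m = ereal (real i) - 1"
          have "\<omega> \<notin> In_set N x \<tau> m i" using nw mj by (auto simp: U_def)
          then show "\<exists>n<\<tau>. Rr N < real_of_int \<bar>walk x \<omega> (i + n)\<bar>" using T by (force simp: In_set_def)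
        qed
        show "notND N (walk x \<omega>) m"
          unfolding notND_def
        proof (intro allI impI)
          fix s assume S: "S_time N (walk x \<omega>) (T_time N (walk x \<omega>) m) = ereal (real s)"
          show "\<exists>k>s. real_of_int \<bar>walk x \<omega> k\<bar> < real_of_int \<bar>walk x \<omega> s\<bar> - aa N"
          proof (rule ccontr)
            assume "\<not> (\<exists>k>s. real_of_int \<bar>walk x \<omega> k\<bar> < real_of_int \<bar>walk x \<omega> s\<bar> - aa N)"
            then have stay: "\<And>k. s < k \<Longrightarrow> real_of_int \<bar>walk x \<omega> s\<bar> - aa N \<le> real_of_int \<bar>walk x \<omega> k\<bar>" by force
            obtain s' where s': "S_time N (walk x \<omega>) (T_time N (walk x \<omega>) m) = ereal (real s')"
                "Rr N < real_of_int \<bar>walk x \<omega> s'\<bar>" using S_time_fin[of N "walk x \<omega>" "T_time N (walk x \<omega>) m"] S by auto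
            have "s' = s" using s'(1) S by simp
            then have big: "2 * aa N < real_of_int \<bar>walk x \<omega> s\<bar>" using s'(2) by (simp add: Rr_aa)
            from det2[of \<omega> J "aa N", OF jump J a big stay]
            have "\<omega> \<in> ND_set N x 1 m s \<or> \<omega> \<in> ND_set N x (-1) m s" using S by (auto simp: ND_set_def)
            then show False using nw mj by (auto simp: U_def)
          qed
        qed
      qed
      have "B_sum N (walk x \<omega>) j \<le> ereal (real (Suc j) * real \<tau>)" by (rule det_bound) (use H in blast)
      then show False using w by simp
    qed
  qed
  have "emeasure Sq {\<omega>\<in>space Sq. ereal (real (Suc j) * real \<tau>) < B_sum N (walk x \<omega>) j} \<le> emeasure Sq (Bad \<union> U)"
    by (intro emeasure_mono incl) (use Um Badm' in auto)
  also have "\<dots> \<le> emeasure Sq Bad + emeasure Sq U"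
    by (rule emeasure_subadditive[OF Badm' Um])
  also have "\<dots> = emeasure Sq U" using Bad0 by simp
  also have "\<dots> \<le> (\<Sum>m\<in>{..j}. emeasure Sq ((\<Union>i. In_set N x \<tau> m i) \<union> (\<Union>s. ND_set N x 1 m s) \<union> (\<Union>s. ND_set N x (-1) m s)))"
    unfolding U_def by (rule emeasure_subadditive_finite) auto
  also have "\<dots> \<le> (\<Sum>m\<in>{..j}. ennreal (\<beta> ^ r))"
  proof (rule sum_mono)
    fix m
    have z: "emeasure Sq (\<Union>s. ND_set N x sg m s) = 0" if "sg = 1 \<or> sg = -1" for sg
    proof -
      have "emeasure Sq (\<Union>s. ND_set N x sg m s) \<le> (\<Sum>s. emeasure Sq (ND_set N x sg m s))"
        by (rule emeasure_subadditive_countably) auto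
      also have "\<dots> = 0" using ND_zero[OF s2pos that] by simp
      finally show ?thesis by simp
    qed
    have "emeasure Sq ((\<Union>i. In_set N x \<tau> m i) \<union> (\<Union>s. ND_set N x 1 m s) \<union> (\<Union>s. ND_set N x (-1) m s))
       \<le> emeasure Sq ((\<Union>i. In_set N x \<tau> m i) \<union> (\<Union>s. ND_set N x 1 m s)) + emeasure Sq (\<Union>s. ND_set N x (-1) m s)"
      by (rule emeasure_subadditive) auto
    also have "\<dots> \<le> emeasure Sq (\<Union>i. In_set N x \<tau> m i) + emeasure Sq (\<Union>s. ND_set N x 1 m s) + emeasure Sq (\<Union>s. ND_set N x (-1) m s)"
      by (intro add_right_mono emeasure_subadditive) auto
    also have "\<dots> = emeasure Sq (\<Union>i. In_set N x \<tau> m i)" using z by simp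
    also have "\<dots> \<le> ennreal (\<beta> ^ r)" by (rule In_bound[OF rL b b0])
    finally show "emeasure Sq ((\<Union>i. In_set N x \<tau> m i) \<union> (\<Union>s. ND_set N x 1 m s) \<union> (\<Union>s. ND_set N x (-1) m s)) \<le> ennreal (\<beta> ^ r)" .
  qed
  also have "\<dots> = ennreal (real (Suc j) * \<beta> ^ r)" using b0 by (simp add: ennreal_mult ennreal_of_nat_eq_real_of_nat)
  finally show ?thesis .
qed

end

context RWs begin

lemma final_fixed:
  fixes N :: nat and x :: int and \<sigma> D C J :: real
  assumes N2: "N \<ge> 2"
    and sig: "\<sigma> > 0" and s2ge: "s2 \<ge> \<sigma>^2 / 4 * real N"
    and D: "D = 256 / \<sigma>^2"
    and Jz: "\<And>z. J < \<bar>real_of_int z\<bar> \<Longrightarrow> pmf p z = 0" and J0: "J \<ge> 0" and J2: "J \<le> 2 * aa N"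
    and m4J: "m4 \<le> J^2 * s2"
    and E5: "real N powr (1/18) \<ge> 8 * D" and E6: "real N powr (13/18) \<ge> 4" and E7: "D * real N powr (2/3) \<ge> 1"
    and Cb: "\<And>n. real n ^ 10 * (31/32)^n \<le> C"
  shows "{\<omega>\<in>space Sq. B_sum N (walk x \<omega>) (nat \<lfloor>real N powr (2/9)\<rfloor>) > ereal (2 * real N powr (17/18))} \<in> sets Sq
     \<and> measure Sq {\<omega>\<in>space Sq. B_sum N (walk x \<omega>) (nat \<lfloor>real N powr (2/9)\<rfloor>) > ereal (2 * real N powr (17/18))}
        \<le> (2 * C * (8 * D)^10) * real N powr (-1/3)"
proof -
  define n where "n = real N"
  have n2: "n \<ge> 2" using N2 by (simp add: n_def)
  have n0: "n > 0" using n2 by simp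
  define j where "j = nat \<lfloor>n powr (2/9)\<rfloor>"
  define \<tau> where "\<tau> = nat \<lfloor>2 * n powr (17/18) / real (Suc j)\<rfloor>"
  define L where "L = nat \<lceil>D * n powr (2/3)\<rceil>"
  define r where "r = (\<tau> - 1) div L"
  have D0: "D > 0" using D sig by simp
  have a_eq: "aa N = n powr (5/6)" by (simp add: aa_def n_def)
  have a0: "aa N > 0" using n0 by (simp add: a_eq)
  have aa2: "(aa N)^2 = n powr (5/3)"
  proof -
    have "(n powr (5/6))^2 = n powr (of_nat 2 * (5/6))" by (rule powr_power) (use n0 in simp)
    then show ?thesis by (simp add: a_eq)
  qed
  have Rr2: "(Rr N)^2 = 4 * n powr (5/3)" using aa2 by (simp add: Rr_aa power2_eq_square)
  have p29: "n powr (2/9) \<ge> 1" using n2 by (simp add: ge_one_powr_ge_zero)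
  have jle: "real j \<le> n powr (2/9)" unfolding j_def using p29 by simp
  have j1: "real (Suc j) \<le> 2 * n powr (2/9)" using jle p29 by simp
  have fpos: "2 * n powr (17/18) / real (Suc j) \<ge> 0" by simp
  have tau_le: "real \<tau> \<le> 2 * n powr (17/18) / real (Suc j)" unfolding \<tau>_def using fpos by simp
  have jt: "real (Suc j) * real \<tau> \<le> 2 * n powr (17/18)"
    using tau_le by (simp add: field_simps del: of_nat_Suc)
  have tau_ge: "real \<tau> \<ge> 2 * n powr (17/18) / real (Suc j) - 1" unfolding \<tau>_def using fpos by linarith
  have "2 * n powr (17/18) / real (Suc j) \<ge> 2 * n powr (17/18) / (2 * n powr (2/9))"
    using j1 p29 by (intro divide_left_mono) (auto intro!: mult_pos_pos)
  also have "2 * n powr (17/18) / (2 * n powr (2/9)) = n powr (13/18)"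
    using n0 by (simp add: powr_diff[symmetric])
  finally have tau_ge2: "real \<tau> \<ge> n powr (13/18) - 1" using tau_ge by linarith
  then have "real \<tau> \<ge> 3" using E6 by (simp add: n_def)
  then have "real \<tau> \<ge> real (1::nat)" by simp
  then have tau1: "\<tau> \<ge> 1" by (simp only: of_nat_le_iff)
  have Lge: "real L \<ge> D * n powr (2/3)" unfolding L_def by linarith
  have Lle: "real L \<le> 2 * D * n powr (2/3)" unfolding L_def using E7 by (simp add: n_def) linarith
  have L1: "L \<ge> 1" using Lge E7 by (simp add: n_def)
  have rL: "r * L < \<tau>" using tau1 div_times_less_eq_dividend[of "\<tau> - 1" L] unfolding r_def by linarith
  have "\<tau> - 1 < Suc r * L"
  proof -
    have "\<tau> - 1 = r * L + (\<tau> - 1) mod L" unfolding r_def by simp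
    moreover have "(\<tau> - 1) mod L < L" using L1 by simp
    ultimately show ?thesis by simp
  qed
  then have "real (\<tau> - 1) < real (Suc r * L)" by (simp only: of_nat_less_iff)
  then have "real (\<tau> - 1) < (real r + 1) * real L" by (simp add: algebra_simps)
  then have rge0: "real r > real (\<tau> - 1) / real L - 1" using L1 by (simp add: field_simps)
  have "real (\<tau> - 1) \<ge> n powr (13/18) / 2" using tau_ge2 tau1 E6 by (simp add: n_def of_nat_diff)
  then have "real (\<tau> - 1) / real L \<ge> (n powr (13/18) / 2) / (2 * D * n powr (2/3))"
    using Lle L1 E7 by (intro frac_le) (auto simp: n_def)
  also have "(n powr (13/18) / 2) / (2 * D * n powr (2/3)) = (n powr (13/18) / n powr (2/3)) / (4 * D)"
    by (simp add: field_simps)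
  also have "n powr (13/18) / n powr (2/3) = n powr (1/18)"
    by (simp add: powr_diff[symmetric])
  finally have "real r > n powr (1/18) / (4 * D) - 1" using rge0 by linarith
  moreover have "n powr (1/18) / (8 * D) \<ge> 1" using E5 D0 by (simp add: n_def)
  ultimately have rge: "real r \<ge> n powr (1/18) / (8 * D)" using D0 by (simp add: field_simps)
  define y where "y = n powr (1/18) / (8 * D)"
  have y1: "y \<ge> 1" using E5 D0 by (simp add: y_def n_def)
  have ry: "real r \<ge> y" using rge by (simp add: y_def)
  have r1: "r \<ge> 1" using ry y1 by linarith
  have "(31/32)^r \<le> C / real r ^ 10"
    using Cb[of r] r1 by (simp add: field_simps)
  also have "\<dots> \<le> C / y ^ 10"
  proof -
    have C0: "C \<ge> 0" using Cb[of 0] by simp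
    have "y ^ 10 \<le> real r ^ 10" using ry y1 by (intro power_mono) auto
    then show ?thesis using C0 y1 by (intro divide_left_mono) auto
  qed
  also have "y ^ 10 = n powr (10/18) / (8 * D) ^ 10"
    using n0 by (simp add: y_def power_divide powr_power)
  finally have "(31/32)^r \<le> C / (n powr (10/18) / (8 * D) ^ 10)" .
  then have q: "(31/32)^r \<le> C * (8 * D) ^ 10 / n powr (10/18)" by (simp only: divide_divide_eq_right)
  have fin: "real (Suc j) * (31/32)^r \<le> (2 * C * (8 * D)^10) * n powr (-1/3)"
  proof -
    have C0: "C \<ge> 0" using Cb[of 0] by simp
    have "real (Suc j) * (31/32)^r \<le> (2 * n powr (2/9)) * (C * (8 * D) ^ 10 / n powr (10/18))"
      using j1 q by (intro mult_mono) auto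
    also have "\<dots> = (2 * C * (8 * D)^10) * (n powr (2/9) / n powr (10/18))"
      by (simp only: times_divide_eq_right times_divide_eq_left mult.assoc mult.left_commute mult.commute)
    also have "n powr (2/9) / n powr (10/18) = n powr (-1/3)"
      by (simp add: powr_diff[symmetric])
    finally show ?thesis .
  qed
  have "\<sigma>^2 / 4 * real N > 0" using sig N2 by simp
  then have s2pos: "s2 > 0" using s2ge by linarith
  have Ls2: "real L * s2 \<ge> 64 * n powr (5/3)"
  proof -
    have "real L * s2 \<ge> (D * n powr (2/3)) * (\<sigma>^2 / 4 * n)"
      using Lge s2ge by (intro mult_mono) (auto simp: n_def D0 less_imp_le)
    also have "(D * n powr (2/3)) * (\<sigma>^2 / 4 * n) = 64 * (n powr (2/3) * n)" using sig by (simp add: D field_simps)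
    also have "n powr (2/3) * n = n powr (5/3)"
    proof -
      have "n powr (2/3) * n = n powr (2/3) * n powr 1" using n0 by simp
      also have "\<dots> = n powr (2/3 + 1)" by (rule powr_add[symmetric])
      finally show ?thesis by simp
    qed
    finally show ?thesis by simp
  qed
  have "64 * n powr (5/3) > 0" using n0 by simp
  then have V: "real L * s2 > 0" using Ls2 by linarith
  have m: "real L * m4 \<le> (real L * s2)^2"
  proof -
    have "J^2 \<le> (2 * aa N)^2" using J0 J2 by (intro power_mono) auto
    also have "\<dots> = 4 * n powr (5/3)" using aa2 by (simp add: power_mult_distrib)
    also have "\<dots> \<le> real L * s2" using Ls2 powr_ge_zero[of n "5/3"] by linarith
    finally have "J^2 \<le> real L * s2" .
    then have "J^2 * s2 \<le> real L * s2 * s2" using s2pos by (intro mult_right_mono) auto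
    then have "m4 \<le> real L * s2 * s2" using m4J by linarith
    then have "real L * m4 \<le> real L * (real L * s2 * s2)" by (intro mult_left_mono) auto
    then show ?thesis by (simp add: power2_eq_square mult_ac)
  qed
  have tR: "2 * Rr N \<le> sqrt (real L * s2) / 2"
  proof -
    have "(4 * Rr N)^2 \<le> real L * s2" using Rr2 Ls2 by (simp add: power_mult_distrib)
    then have "4 * Rr N \<le> sqrt (real L * s2)" by (rule real_le_rsqrt)
    then show ?thesis by simp
  qed
  have b: "emeasure Sq {\<omega>\<in>space Sq. \<bar>real_of_int (Z L \<omega>)\<bar> \<le> 2 * Rr N} \<le> ennreal (31/32)"
  proof -
    let ?B = "{w::int. \<bar>real_of_int w\<bar> \<le> 2 * Rr N}"
    have "measure_pmf.prob (conv p L) (UNIV - ?B) \<ge> measure_pmf.prob (conv p L) {w. \<bar>real_of_int w\<bar> > sqrt (real L * s2) / 2}"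
      using tR by (intro measure_pmf.finite_measure_mono) auto
    then have "measure_pmf.prob (conv p L) (UNIV - ?B) \<ge> 1/32" using anti[OF V m] by linarith
    then have "measure_pmf.prob (conv p L) ?B \<le> 31/32"
      using measure_pmf.prob_compl[of ?B "conv p L"] by (simp add: Compl_eq_Diff_UNIV)
    moreover have "emeasure Sq {\<omega>\<in>space Sq. \<bar>real_of_int (Z L \<omega>)\<bar> \<le> 2 * Rr N} = ennreal (measure_pmf.prob (conv p L) ?B)"
      using emeasure_Z[of L ?B] by (simp add: measure_pmf.emeasure_eq_measure)
    ultimately show ?thesis by (simp add: ennreal_leI)
  qed
  have main: "emeasure Sq {\<omega>\<in>space Sq. ereal (real (Suc j) * real \<tau>) < B_sum N (walk x \<omega>) j}
     \<le> ennreal (real (Suc j) * (31/32) ^ r)"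
    by (rule main_fixed[OF s2pos Jz J2 a0 b _ rL]) auto
  let ?E = "{\<omega>\<in>space Sq. B_sum N (walk x \<omega>) (nat \<lfloor>real N powr (2/9)\<rfloor>) > ereal (2 * real N powr (17/18))}"
  have [measurable]: "(\<lambda>\<omega>. B_sum N (walk x \<omega>) j) \<in> borel_measurable Sq" by (rule B_meas)
  have Em: "?E \<in> sets Sq" using B_meas[of N x "nat \<lfloor>real N powr (2/9)\<rfloor>"] by measurable
  have sub: "?E \<subseteq> {\<omega>\<in>space Sq. ereal (real (Suc j) * real \<tau>) < B_sum N (walk x \<omega>) j}"
  proof
    fix \<omega> assume "\<omega> \<in> ?E"
    then have "ereal (2 * n powr (17/18)) < B_sum N (walk x \<omega>) j" by (simp add: j_def n_def)
    moreover have "ereal (real (Suc j) * real \<tau>) \<le> ereal (2 * n powr (17/18))" using jt by simp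
    ultimately have "ereal (real (Suc j) * real \<tau>) < B_sum N (walk x \<omega>) j" by (rule le_less_trans[rotated])
    then show "\<omega> \<in> {\<omega>\<in>space Sq. ereal (real (Suc j) * real \<tau>) < B_sum N (walk x \<omega>) j}" by simp
  qed
  have "emeasure Sq ?E \<le> ennreal (real (Suc j) * (31/32) ^ r)"
    using order.trans[OF emeasure_mono[OF sub] main] by measurable
  then have "ennreal (measure Sq ?E) \<le> ennreal (real (Suc j) * (31/32) ^ r)"
    by (simp only: SS.emeasure_eq_measure)
  moreover have "0 \<le> real (Suc j) * (31/32) ^ r" by simp
  ultimately have "measure Sq ?E \<le> real (Suc j) * (31/32) ^ r"
    by (simp only: ennreal_le_iff)
  also have "\<dots> \<le> (2 * C * (8 * D)^10) * real N powr (-1/3)" using fin by (simp add: n_def)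
  finally show ?thesis using Em by simp
qed

end

theorem proposition2:
  fixes q :: "nat \<Rightarrow> int pmf" and x :: "nat \<Rightarrow> int" and \<sigma>N :: "nat \<Rightarrow> real"
    and \<sigma> h c C B :: real and N0 :: nat
  assumes sym: "\<And>N z. N \<ge> N0 \<Longrightarrow> pmf (q N) z = pmf (q N) (- z)"
    and var: "\<And>N. N \<ge> N0 \<Longrightarrow>
               (\<Sum>\<^sub>\<infinity>z. (real_of_int z)\<^sup>2 * pmf (q N) z) = (\<sigma>N N)\<^sup>2 * real N"
    and sigma_lim: "\<sigma>N \<longlonglongrightarrow> \<sigma>" and sigma_pos: "0 < \<sigma>"
    and h_pos: "h > 0"
    and lower: "\<And>N z. N \<ge> N0 \<Longrightarrow> real_of_int \<bar>z\<bar> \<le> sqrt (real N) \<Longrightarrow>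
                  pmf (q N) z \<ge> h / sqrt (real N)"
    and c_pos: "c > 0" and C_pos: "C > 0"
    and upper: "\<And>N z. N \<ge> N0 \<Longrightarrow>
                  pmf (q N) z \<le> C * exp (- c * real_of_int \<bar>z\<bar> / sqrt (real N))"
    and support: "\<And>N z. N \<ge> N0 \<Longrightarrow> real_of_int \<bar>z\<bar> > B * sqrt (real N) * ln (real N) \<Longrightarrow>
                  pmf (q N) z = 0"
    and start: "\<And>N. N \<ge> N0 \<Longrightarrow> real_of_int (x N) \<ge> 2 * real N powr (5/6)"
  shows "\<exists>K. \<forall>\<^sub>F N in sequentially.
     (let M = PiM UNIV (\<lambda>_::nat. measure_pmf (q N));
          E = {xi \<in> space M. B_sum N (walk (x N) xi) (nat \<lfloor>real N powr (2/9)\<rfloor>)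
                              > ereal (2 * real N powr (17/18))}
      in E \<in> sets M \<and> measure M E \<le> K * real N powr (-1/3))"
proof -
  have lim: "(\<lambda>n::nat. real n ^ 10 * (31/32)^n) \<longlonglongrightarrow> 0" by real_asymp
  then have "Bseq (\<lambda>n::nat. real n ^ 10 * (31/32)^n)" by (rule convergent_imp_Bseq[OF convergentI])
  then obtain C where Cb0: "\<And>n. norm (real n ^ 10 * (31/32::real)^n) \<le> C" by (auto simp: Bseq_def)
  have Cb: "\<And>n. real n ^ 10 * (31/32::real)^n \<le> C" using Cb0 by (metis abs_ge_self order.trans real_norm_def)
  define D where "D = 256 / \<sigma>^2"
  have D0: "D > 0" using sigma_pos by (simp add: D_def)
  define K where "K = 2 * C * (8 * D)^10"
  have ev1: "\<forall>\<^sub>F N in sequentially. max N0 2 \<le> N" by (rule eventually_ge_at_top)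
  have ev2: "\<forall>\<^sub>F N in sequentially. \<sigma>/2 < \<sigma>N N"
    using order_tendstoD(1)[OF sigma_lim, of "\<sigma>/2"] sigma_pos by simp
  have L3: "(\<lambda>N::nat. sqrt (real N) * ln (real N) / real N powr (5/6)) \<longlonglongrightarrow> 0" by real_asymp
  have ev3: "\<forall>\<^sub>F N in sequentially. sqrt (real N) * ln (real N) / real N powr (5/6) < 2 / (\<bar>B\<bar> + 1)"
    by (rule order_tendstoD(2)[OF L3]) (simp add: add_pos_nonneg)
  have L2a: "filterlim (\<lambda>N::nat. real N powr (1/18)) at_top sequentially" by real_asymp
  have L2b: "filterlim (\<lambda>N::nat. real N powr (13/18)) at_top sequentially" by real_asymp
  have L2c: "filterlim (\<lambda>N::nat. real N powr (2/3)) at_top sequentially" by real_asymp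
  have ev4: "\<forall>\<^sub>F N in sequentially. 8 * D \<le> real N powr (1/18)"
    using L2a by (simp add: filterlim_at_top)
  have ev5: "\<forall>\<^sub>F N in sequentially. 4 \<le> real N powr (13/18)"
    using L2b by (simp add: filterlim_at_top)
  have ev6: "\<forall>\<^sub>F N in sequentially. 1 / D \<le> real N powr (2/3)"
    using L2c by (simp add: filterlim_at_top)
  have "\<forall>\<^sub>F N in sequentially.
     (let M = PiM UNIV (\<lambda>_::nat. measure_pmf (q N));
          E = {xi \<in> space M. B_sum N (walk (x N) xi) (nat \<lfloor>real N powr (2/9)\<rfloor>)
                              > ereal (2 * real N powr (17/18))}
      in E \<in> sets M \<and> measure M E \<le> K * real N powr (-1/3))"
    using ev1 ev2 ev3 ev4 ev5 ev6
  proof eventually_elim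
    case (elim N)
    have NN0: "N \<ge> N0" and N2: "N \<ge> 2" using elim(1) by auto
    define J where "J = B * sqrt (real N) * ln (real N)"
    have Jz: "\<And>z. J < \<bar>real_of_int z\<bar> \<Longrightarrow> pmf (q N) z = 0" using support[OF NN0] by (simp add: J_def)
    have sp: "set_pmf (q N) \<subseteq> {z. \<bar>real_of_int z\<bar> \<le> J}" using Jz by (force simp: set_pmf_iff not_less)
    have "{z::int. \<bar>real_of_int z\<bar> \<le> J} \<subseteq> {- \<lceil>J\<rceil>..\<lceil>J\<rceil>}"
    proof
      fix z :: int assume "z \<in> {z. \<bar>real_of_int z\<bar> \<le> J}"
      then have "\<bar>real_of_int z\<bar> \<le> J" by simp
      then have "real_of_int z \<le> J" "- J \<le> real_of_int z" by linarith+
      then have "z \<le> \<lceil>J\<rceil>" "- \<lceil>J\<rceil> \<le> z" by linarith+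
      then show "z \<in> {- \<lceil>J\<rceil>..\<lceil>J\<rceil>}" by simp
    qed
    then have finp: "finite (set_pmf (q N))" using sp by (meson finite_atLeastAtMost_int finite_subset)
    have symp: "\<And>z. pmf (q N) (- z) = pmf (q N) z" using sym[OF NN0] by simp
    interpret R: RWs "q N" by unfold_locales (use finp symp in auto)
    obtain z0 where z0: "z0 \<in> set_pmf (q N)" using set_pmf_not_empty by fast
    have J0: "J \<ge> 0" using sp z0 by force
    have s2eq: "R.s2 = (\<sigma>N N)^2 * real N"
    proof -
      have "R.s2 = (\<Sum>z\<in>set_pmf (q N). (real_of_int z)^2 * pmf (q N) z)"
        unfolding R.s2_def by (rule integral_measure_pmf_real[OF finp]) auto
      also have "\<dots> = (\<Sum>\<^sub>\<infinity>z\<in>set_pmf (q N). (real_of_int z)^2 * pmf (q N) z)" using finp by simp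
      also have "\<dots> = (\<Sum>\<^sub>\<infinity>z. (real_of_int z)^2 * pmf (q N) z)"
        by (rule infsum_cong_neutral) (auto simp: set_pmf_iff)
      also have "\<dots> = (\<sigma>N N)^2 * real N" by (rule var[OF NN0])
      finally show ?thesis .
    qed
    have "(\<sigma>/2)^2 \<le> (\<sigma>N N)^2" using elim(2) sigma_pos by (intro power_mono) auto
    then have s2ge: "R.s2 \<ge> \<sigma>^2 / 4 * real N" unfolding s2eq by (intro mult_right_mono) (auto simp: power_divide)
    have sl0: "sqrt (real N) * ln (real N) \<ge> 0" using N2 by simp
    have "sqrt (real N) * ln (real N) < 2 / (\<bar>B\<bar> + 1) * real N powr (5/6)"
      using elim(3) N2 by (simp add: divide_less_eq)
    then have "(\<bar>B\<bar> + 1) * (sqrt (real N) * ln (real N)) < 2 * real N powr (5/6)"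
      by (simp add: field_simps add_pos_nonneg)
    moreover have "J \<le> (\<bar>B\<bar> + 1) * (sqrt (real N) * ln (real N))"
    proof -
      have "J \<le> \<bar>B\<bar> * (sqrt (real N) * ln (real N))" unfolding J_def using sl0
        by (metis abs_ge_self mult.assoc mult_right_mono)
      also have "\<dots> \<le> (\<bar>B\<bar> + 1) * (sqrt (real N) * ln (real N))" using sl0 by (intro mult_right_mono) auto
      finally show ?thesis .
    qed
    ultimately have J2: "J \<le> 2 * aa N" by (simp add: aa_def)
    have m4J: "R.m4 \<le> J^2 * R.s2"
    proof -
      have "R.m4 \<le> measure_pmf.expectation (q N) (\<lambda>z. J^2 * (real_of_int z)^2)"
        unfolding R.m4_def
      proof (rule integral_mono_AE)
        show "AE z in measure_pmf (q N). (real_of_int z)^4 \<le> J^2 * (real_of_int z)^2"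
        proof (subst AE_measure_pmf_iff, intro ballI)
          fix z assume "z \<in> set_pmf (q N)"
          then have "\<bar>real_of_int z\<bar> \<le> J" using sp by auto
          then have "(real_of_int z)^2 \<le> J^2" by (metis abs_ge_zero order.trans power2_abs power_mono)
          then have "(real_of_int z)^2 * (real_of_int z)^2 \<le> J^2 * (real_of_int z)^2" by (intro mult_right_mono) auto
          then show "(real_of_int z)^4 \<le> J^2 * (real_of_int z)^2" by (simp add: power4_eq_xxxx power2_eq_square mult.assoc)
        qed
      qed (auto intro: R.intp)
      also have "\<dots> = J^2 * R.s2" unfolding R.s2_def by simp
      finally show ?thesis .
    qed
    have E7: "D * real N powr (2/3) \<ge> 1" using elim(6) D0 by (simp add: field_simps)
    note main = R.final_fixed[of N \<sigma> D J C "x N", OF N2 sigma_pos s2ge D_def Jz J0 J2 m4J elim(4) elim(5) E7 Cb]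
    show ?case unfolding Let_def K_def using main by simp
  qed
  then show ?thesis by blast
qed


end
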